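(* Let $A=\mathrm{Circ}(a_0,\dots,a_{n-1})\neq 0$, and let $p_1>p_2>\dots>p_s$ be all the indices in $\{1,\dots,n-1\}$ with $a_{p_1}=\dots=a_{p_s}=\lambda(A)$ (possibly $s=0$). Then: (i) the critical digraph $\mathcal{C}(A)$ consists of $m=\gcd(n,p_1,\dots,p_s)$ isomorphic strongly connected components, and for $i\in\{1,\dots,m\}$ the node set of the $i$-th component is $\{i,i+m,\dots,i+(n/m-1)m\}$; (ii) $\mathrm{per}(A)$, which equals the cyclicity of each of these components, is $1$ if $a_0=\lambda(A)$, and if $a_0\neq\lambda(A)$ then $$\mathrm{per}(A)=\gcd\Big(\tfrac{n}{\gcd(n,p_1)},\tfrac{p_1-p_2}{\gcd(p_1,p_2)},\tfrac{p_1-p_3}{\gcd(p_1,p_3)},\dots,\tfrac{p_1-p_s}{\gcd(p_1,p_s)}\Big)$$ $$=\gcd\Big(\tfrac{n}{\gcd(n,p_1)},\tfrac{p_1-p_2}{\gcd(p_1,p_2)},\tfrac{p_2-p_3}{\gcd(p_2,p_3)},\dots,\tfrac{p_{s-1}-p_s}{\gcd(p_{s-1},p_s)}\Big)$$ $$=\gcd\Big(\tfrac{n}{\gcd(n,p_1)},\tfrac{p_1-p_2}{\gcd(n,p_1,p_2)},\tfrac{p_1-p_3}{\gcd(n,p_1,p_2,p_3)},\dots,\tfrac{p_1-p_s}{\gcd(n,p_1,\dots,p_s)}\Big).$$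
   Context: Max algebra on $\mathbb{R}_+$ with $a\oplus b=\max(a,b)$ and ordinary product; $A^t$ is the max-algebraic power. $A=\mathrm{Circ}(a_0,\dots,a_{n-1})$ means $A_{i,j}=a_t$ with $t\in\{0,\dots,n-1\}$, $t\equiv j-i\pmod n$. The digraph $\mathcal{G}(A)$ has nodes $\{1,\dots,n\}$ and edges $(i,j)$ with $A_{i,j}\neq0$, weight $A_{i,j}$; a cycle's mean is the geometric mean of its edge weights; $\lambda(A)$ is the maximum cycle geometric mean (= largest max-algebraic eigenvalue). The critical digraph $\mathcal{C}(A)$ consists of all nodes and edges of the cycles of $\mathcal{G}(A)$ attaining mean $\lambda(A)$. The cyclicity of a strongly connected digraph is the gcd of its cycle lengths; of a digraph that is a disjoint union of strongly connected components with no walks between components, it is the lcm of the components' cyclicities. For $\lambda(A)\ne0$, $\mathrm{per}(A)$ is the ultimate period of the sequence $\{(A/\lambda(A))^t\}_{t\ge1}$, i.e. the least $\sigma$ such that $(A/\lambda(A))^{t+\sigma}=(A/\lambda(A))^t$ for all sufficiently large $t$. *)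

theory Defs
  imports Complex_Main
begin

text \<open>Square matrices over the nonnegative reals of size n are functions
  nat \<Rightarrow> nat \<Rightarrow> real; only indices in {1..n} are relevant.\<close>

definition circ :: "nat \<Rightarrow> (nat \<Rightarrow> real) \<Rightarrow> nat \<Rightarrow> nat \<Rightarrow> real" where
  "circ n a i j = a ((j + n - i) mod n)"

fun mpow :: "nat \<Rightarrow> (nat \<Rightarrow> nat \<Rightarrow> real) \<Rightarrow> nat \<Rightarrow> nat \<Rightarrow> nat \<Rightarrow> real" where
  "mpow n A 0 = (\<lambda>i j. if i = j then 1 else 0)"
| "mpow n A (Suc t) = (\<lambda>i j. Max ((\<lambda>k. mpow n A t i k * A k j) ` {1..n}))"

definition graph_edges :: "nat \<Rightarrow> (nat \<Rightarrow> nat \<Rightarrow> real) \<Rightarrow> (nat \<times> nat) set" where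
  "graph_edges n A = {(i, j). i \<in> {1..n} \<and> j \<in> {1..n} \<and> A i j \<noteq> 0}"

definition cycle_in :: "(nat \<times> nat) set \<Rightarrow> nat list \<Rightarrow> bool" where
  "cycle_in E c \<longleftrightarrow> c \<noteq> [] \<and> distinct c \<and>
     (\<forall>k < length c. (c ! k, c ! ((k + 1) mod length c)) \<in> E)"

definition cycle_edges :: "nat list \<Rightarrow> (nat \<times> nat) set" where
  "cycle_edges c = {(c ! k, c ! ((k + 1) mod length c)) | k. k < length c}"

definition cycle_weight :: "(nat \<Rightarrow> nat \<Rightarrow> real) \<Rightarrow> nat list \<Rightarrow> real" where
  "cycle_weight A c = (\<Prod>k < length c. A (c ! k) (c ! ((k + 1) mod length c)))"

definition cycle_mean :: "(nat \<Rightarrow> nat \<Rightarrow> real) \<Rightarrow> nat list \<Rightarrow> real" where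
  "cycle_mean A c = root (length c) (cycle_weight A c)"

definition mcm :: "nat \<Rightarrow> (nat \<Rightarrow> nat \<Rightarrow> real) \<Rightarrow> real" where
  "mcm n A = Max (cycle_mean A ` {c. cycle_in (graph_edges n A) c})"

definition critical_cycle :: "nat \<Rightarrow> (nat \<Rightarrow> nat \<Rightarrow> real) \<Rightarrow> nat list \<Rightarrow> bool" where
  "critical_cycle n A c \<longleftrightarrow> cycle_in (graph_edges n A) c \<and> cycle_mean A c = mcm n A"

definition crit_nodes :: "nat \<Rightarrow> (nat \<Rightarrow> nat \<Rightarrow> real) \<Rightarrow> nat set" where
  "crit_nodes n A = (\<Union>c \<in> {c. critical_cycle n A c}. set c)"

definition crit_edges :: "nat \<Rightarrow> (nat \<Rightarrow> nat \<Rightarrow> real) \<Rightarrow> (nat \<times> nat) set" where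
  "crit_edges n A = (\<Union>c \<in> {c. critical_cycle n A c}. cycle_edges c)"

definition strongly_connected_on :: "(nat \<times> nat) set \<Rightarrow> nat set \<Rightarrow> bool" where
  "strongly_connected_on E S \<longleftrightarrow> S \<noteq> {} \<and>
     (\<forall>x \<in> S. \<forall>y \<in> S. (x, y) \<in> (E \<inter> S \<times> S)\<^sup>*)"

definition cyclicity :: "(nat \<times> nat) set \<Rightarrow> nat" where
  "cyclicity E = Gcd {length c | c. cycle_in E c}"

definition per :: "nat \<Rightarrow> (nat \<Rightarrow> nat \<Rightarrow> real) \<Rightarrow> nat" where
  "per n A = (LEAST \<sigma>. \<sigma> > 0 \<and> (\<exists>T. \<forall>t \<ge> T. \<forall>i \<in> {1..n}. \<forall>j \<in> {1..n}.
      mpow n (\<lambda>i j. A i j / mcm n A) (t + \<sigma>) i j = mpow n (\<lambda>i j. A i j / mcm n A) t i j))"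

end

theory Submission
  imports Defs "HOL-Library.FuncSet"
begin


lemma eventually_const_aux:
  fixes f :: "nat \<Rightarrow> real"
  assumes nn: "\<And>k. 0 \<le> f k" and fin: "\<And>v. v > 0 \<Longrightarrow> finite (range f \<inter> {v..})"
    and mono: "\<And>k j. j \<ge> J \<Longrightarrow> f k \<le> f (k + j)"
  shows "\<exists>K. \<forall>k\<ge>K. f k = f K"
proof (cases "\<forall>k. f k = 0")
  case True then show ?thesis by auto
next
  case False
  then obtain k1 where k1: "f k1 > 0" using nn by (metis less_eq_real_def)
  define X where "X = f ` {k1+J..}"
  have "X \<subseteq> range f \<inter> {f k1..}"
  proof
    fix x assume "x \<in> X"
    then obtain k where k: "k \<ge> k1 + J" "x = f k" unfolding X_def by auto
    have "f k1 \<le> f (k1 + (k - k1))" using k by (intro mono) auto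
    then show "x \<in> range f \<inter> {f k1..}" using k by auto
  qed
  then have finX: "finite X" using fin[OF k1] finite_subset by blast
  have neX: "X \<noteq> {}" unfolding X_def by auto
  have "Max X \<in> X" using finX neX by (rule Max_in)
  then obtain k2 where k2: "k2 \<ge> k1 + J" "f k2 = Max X" unfolding X_def by auto
  have const: "f k = f k2" if "k \<ge> k2 + J" for k
  proof -
    have "f k2 \<le> f (k2 + (k - k2))" using that by (intro mono) auto
    then have ge: "f k2 \<le> f k" using that by simp
    have "f k \<in> X" unfolding X_def using that k2 by auto
    then have "f k \<le> Max X" using finX by simp
    then show ?thesis using ge k2 by simp
  qed
  show ?thesis
    by (rule exI[of _ "k2 + J"]) (auto simp: const)
qed

context
  fixes n :: nat and B :: "nat \<Rightarrow> nat \<Rightarrow> real"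
  assumes npos: "n \<ge> 1"
    and Bnn: "\<And>i j. i \<in> {1..n} \<Longrightarrow> j \<in> {1..n} \<Longrightarrow> 0 \<le> B i j"
    and Ble: "\<And>i j. i \<in> {1..n} \<Longrightarrow> j \<in> {1..n} \<Longrightarrow> B i j \<le> 1"
begin

lemma mpow_Suc_ge: "k \<in> {1..n} \<Longrightarrow> mpow n B t i k * B k j \<le> mpow n B (Suc t) i j"
  unfolding mpow.simps by (rule Max_ge) auto

lemma mpow_Suc_ex: "\<exists>k\<in>{1..n}. mpow n B (Suc t) i j = mpow n B t i k * B k j"
proof -
  have "Max ((\<lambda>k. mpow n B t i k * B k j) ` {1..n}) \<in> (\<lambda>k. mpow n B t i k * B k j) ` {1..n}"
    using npos by (intro Max_in) auto
  then show ?thesis by auto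
qed

lemma mpow_nn: "i \<in> {1..n} \<Longrightarrow> j \<in> {1..n} \<Longrightarrow> 0 \<le> mpow n B t i j"
proof (induction t arbitrary: j)
  case 0 then show ?case by simp
next
  case (Suc t)
  have "0 \<le> mpow n B t i 1 * B 1 j" using Suc npos Bnn by auto
  also have "\<dots> \<le> mpow n B (Suc t) i j" using npos by (intro mpow_Suc_ge) auto
  finally show ?case .
qed

lemma mpow_le1: "i \<in> {1..n} \<Longrightarrow> j \<in> {1..n} \<Longrightarrow> mpow n B t i j \<le> 1"
proof (induction t arbitrary: j)
  case 0 then show ?case by simp
next
  case (Suc t)
  obtain k where k: "k \<in> {1..n}" "mpow n B (Suc t) i j = mpow n B t i k * B k j"
    using mpow_Suc_ex by blast
  show ?case unfolding k(2)
    using Suc k(1) Bnn Ble mpow_nn by (intro mult_le_one) auto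
qed

lemma mpow_1: "i \<in> {1..n} \<Longrightarrow> j \<in> {1..n} \<Longrightarrow> mpow n B 1 i j = B i j"
proof -
  assume ij: "i \<in> {1..n}" "j \<in> {1..n}"
  have "mpow n B (Suc 0) i j = Max ((\<lambda>k. (if i = k then 1 else 0) * B k j) ` {1..n})" by simp
  also have "\<dots> = B i j"
    using ij Bnn by (intro Max_eqI) auto
  finally show ?thesis by simp
qed

lemma mpow_mult:
  assumes "i \<in> {1..n}" "k \<in> {1..n}" "j \<in> {1..n}"
  shows "mpow n B t i k * mpow n B l k j \<le> mpow n B (t + l) i j"
  using assms(3)
proof (induction l arbitrary: j)
  case 0
  then show ?case using mpow_nn assms by auto
next
  case (Suc l)
  obtain k' where k': "k' \<in> {1..n}" "mpow n B (Suc l) k j = mpow n B l k k' * B k' j"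
    using mpow_Suc_ex by blast
  have "mpow n B t i k * mpow n B (Suc l) k j = (mpow n B t i k * mpow n B l k k') * B k' j"
    using k' by simp
  also have "\<dots> \<le> mpow n B (t + l) i k' * B k' j"
    using Suc.IH[OF k'(1)] Bnn k'(1) Suc.prems by (intro mult_right_mono) auto
  also have "\<dots> \<le> mpow n B (Suc (t + l)) i j" using k'(1) by (rule mpow_Suc_ge)
  finally show ?case by simp
qed

lemma mpow_one_add:
  assumes "i \<in> {1..n}" "k \<in> {1..n}" "j \<in> {1..n}"
    and "mpow n B t i k = 1" "mpow n B l k j = 1"
  shows "mpow n B (t + l) i j = 1"
  using mpow_mult[OF assms(1-3), of t l] mpow_le1[OF assms(1,3), of "t+l"] assms(4,5) by simp

lemma mpow_mono_one:
  assumes "i \<in> {1..n}" "j \<in> {1..n}" "mpow n B l j j = 1"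
  shows "mpow n B t i j \<le> mpow n B (t + l) i j"
  using mpow_mult[OF assms(1,2,2), of t l] assms(3) by simp

definition prodE :: "(nat \<times> nat \<Rightarrow> nat) \<Rightarrow> real" where
  "prodE e = (\<Prod>pr\<in>{1..n}\<times>{1..n}. B (fst pr) (snd pr) ^ e pr)"

lemma prodE_upd:
  assumes "k \<in> {1..n}" "j \<in> {1..n}"
  shows "prodE e * B k j = prodE (e((k,j) := Suc (e (k,j))))"
proof -
  have fin: "finite ({1..n}\<times>{1..n})" by simp
  have mem: "(k,j) \<in> {1..n}\<times>{1..n}" using assms by simp
  define R where "R = (\<Prod>pr\<in>{1..n}\<times>{1..n} - {(k,j)}. B (fst pr) (snd pr) ^ e pr)"
  have eq1: "prodE (e((k,j) := Suc (e (k,j)))) = B k j ^ Suc (e (k,j)) * R"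
  proof -
    have "prodE (e((k,j) := Suc (e (k,j)))) =
     B k j ^ Suc (e (k,j)) * (\<Prod>pr\<in>{1..n}\<times>{1..n} - {(k,j)}. B (fst pr) (snd pr) ^ (e((k,j) := Suc (e (k,j)))) pr)"
      unfolding prodE_def by (subst prod.remove[OF fin mem]) simp
    also have "(\<Prod>pr\<in>{1..n}\<times>{1..n} - {(k,j)}. B (fst pr) (snd pr) ^ (e((k,j) := Suc (e (k,j)))) pr) = R"
      unfolding R_def by (rule prod.cong) auto
    finally show ?thesis .
  qed
  have eq2: "prodE e = B k j ^ e (k,j) * R"
    unfolding prodE_def R_def by (subst prod.remove[OF fin mem]) simp
  show ?thesis unfolding eq1 eq2 by simp
qed

lemma mpow_repr: "i \<in> {1..n} \<Longrightarrow> j \<in> {1..n} \<Longrightarrow> mpow n B t i j = 0 \<or> (\<exists>e. mpow n B t i j = prodE e)"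
proof (induction t arbitrary: j)
  case 0
  then show ?case by (auto simp: prodE_def intro!: exI[of _ "\<lambda>_. 0"])
next
  case (Suc t)
  obtain k where k: "k \<in> {1..n}" "mpow n B (Suc t) i j = mpow n B t i k * B k j"
    using mpow_Suc_ex by blast
  from Suc.IH[OF Suc.prems(1) k(1)] show ?case
  proof
    assume "mpow n B t i k = 0" then show ?case using k by simp
  next
    assume "\<exists>e. mpow n B t i k = prodE e"
    then obtain e where "mpow n B t i k = prodE e" by blast
    then show ?case using k prodE_upd[OF k(1) Suc.prems(2)] by metis
  qed
qed

lemma prodE_le_factor:
  assumes "pr \<in> {1..n}\<times>{1..n}"
  shows "prodE e \<le> B (fst pr) (snd pr) ^ e pr"
proof -
  have fin: "finite ({1..n}\<times>{1..n})" by simp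
  have "prodE e = B (fst pr) (snd pr) ^ e pr * (\<Prod>q\<in>{1..n}\<times>{1..n} - {pr}. B (fst q) (snd q) ^ e q)"
    unfolding prodE_def using prod.remove[OF fin assms] by simp
  also have "\<dots> \<le> B (fst pr) (snd pr) ^ e pr * 1"
    using assms Bnn Ble
    by (intro mult_left_mono prod_le_1) (auto intro!: power_le_one)
  finally show ?thesis by simp
qed

lemma finite_prodE_ge:
  assumes "v > 0"
  shows "finite (range prodE \<inter> {v..})"
proof -
  define D where "D = {1..n}\<times>{1..n}"
  define Q where "Q = (\<lambda>pr. B (fst pr) (snd pr)) ` {pr \<in> D. B (fst pr) (snd pr) < 1}"
  define \<beta> where "\<beta> = Max (insert 0 Q)"
  have finQ: "finite Q" unfolding Q_def D_def by simp
  have b0: "0 \<le> \<beta>" unfolding \<beta>_def using finQ by simp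
  have b1: "\<beta> < 1" unfolding \<beta>_def using finQ by (subst Max_less_iff) (auto simp: Q_def)
  obtain E where E: "\<beta> ^ E < v" using real_arch_pow_inv[OF assms b1] by blast
  have sub: "range prodE \<inter> {v..} \<subseteq> prodE ` (Pi\<^sub>E D (\<lambda>_. {..E}))"
  proof
    fix x assume "x \<in> range prodE \<inter> {v..}"
    then obtain e where x: "x = prodE e" "v \<le> prodE e" by auto
    have small: "B (fst pr) (snd pr) = 1 \<or> e pr < E" if pr: "pr \<in> D" for pr
    proof (rule ccontr)
      assume "\<not> ?thesis"
      then have lt: "B (fst pr) (snd pr) < 1" and ge: "E \<le> e pr"
        using Ble pr unfolding D_def by (auto simp: less_le mem_Times_iff)
      have "B (fst pr) (snd pr) \<in> Q" using lt pr unfolding Q_def by auto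
      then have "B (fst pr) (snd pr) \<le> \<beta>" unfolding \<beta>_def using finQ by simp
      then have "B (fst pr) (snd pr) ^ e pr \<le> \<beta> ^ e pr"
        using Bnn pr unfolding D_def by (intro power_mono) (auto simp: mem_Times_iff)
      also have "\<dots> \<le> \<beta> ^ E" using ge b0 b1 by (intro power_decreasing) auto
      finally have "prodE e < v" using prodE_le_factor[of pr e] pr E unfolding D_def by linarith
      then show False using x by simp
    qed
    define e' where "e' = restrict (\<lambda>pr. if B (fst pr) (snd pr) = 1 then 0 else e pr) D"
    have "prodE e' = prodE e" unfolding prodE_def D_def[symmetric]
      by (rule prod.cong) (auto simp: e'_def)
    moreover have "e' \<in> Pi\<^sub>E D (\<lambda>_. {..E})" using small by (auto simp: e'_def) (meson less_imp_le)
    ultimately show "x \<in> prodE ` (Pi\<^sub>E D (\<lambda>_. {..E}))" using x by (metis image_eqI)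
  qed
  show ?thesis
    by (rule finite_subset[OF sub]) (auto simp: D_def intro!: finite_PiE)
qed

lemma finite_mpow_ge:
  assumes "v > 0" "i \<in> {1..n}" "j \<in> {1..n}"
  shows "finite (range (\<lambda>t. mpow n B (g t) i j) \<inter> {v..})"
proof -
  have "range (\<lambda>t. mpow n B (g t) i j) \<inter> {v..} \<subseteq> range prodE \<inter> {v..}"
  proof
    fix x assume x: "x \<in> range (\<lambda>t. mpow n B (g t) i j) \<inter> {v..}"
    then obtain t where t: "x = mpow n B (g t) i j" "v \<le> x" by auto
    then have "x \<noteq> 0" using assms(1) by auto
    then obtain e where "x = prodE e" using mpow_repr[OF assms(2,3), of "g t"] t by auto
    then show "x \<in> range prodE \<inter> {v..}" using t by auto
  qed
  then show ?thesis using finite_prodE_ge[OF assms(1)] finite_subset by blast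
qed

lemma periodic_ex:
  assumes sig: "\<sigma> > 0"
    and diag: "\<And>j. j \<in> {1..n} \<Longrightarrow> \<exists>J. \<forall>l\<ge>J. \<sigma> dvd l \<longrightarrow> mpow n B l j j = 1"
  shows "\<exists>T. \<forall>t\<ge>T. \<forall>i\<in>{1..n}. \<forall>j\<in>{1..n}. mpow n B (t + \<sigma>) i j = mpow n B t i j"
proof -
  define X where "X = {..<\<sigma>} \<times> {1..n} \<times> {1..n}"
  have key: "\<forall>x\<in>X. \<exists>K. \<forall>k\<ge>K. mpow n B (fst x + \<sigma> * k) (fst (snd x)) (snd (snd x))
         = mpow n B (fst x + \<sigma> * K) (fst (snd x)) (snd (snd x))"
  proof
    fix x assume "x \<in> X"
    then obtain \<rho> i j where x: "x = (\<rho>, i, j)" "i \<in> {1..n}" "j \<in> {1..n}"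
      unfolding X_def by auto
    obtain J where J: "\<forall>l\<ge>J. \<sigma> dvd l \<longrightarrow> mpow n B l j j = 1" using diag[OF x(3)] by blast
    have "\<exists>K. \<forall>k\<ge>K. (\<lambda>k. mpow n B (\<rho> + \<sigma> * k) i j) k = (\<lambda>k. mpow n B (\<rho> + \<sigma> * k) i j) K"
    proof (rule eventually_const_aux[where J = J])
      fix k show "0 \<le> mpow n B (\<rho> + \<sigma> * k) i j" using mpow_nn x by auto
    next
      fix v :: real assume "v > 0"
      then show "finite (range (\<lambda>k. mpow n B (\<rho> + \<sigma> * k) i j) \<inter> {v..})"
        using finite_mpow_ge[OF _ x(2,3), of v "\<lambda>k. \<rho> + \<sigma> * k"] by simp
    next
      fix k j' :: nat assume "J \<le> j'"
      moreover have "j' \<le> \<sigma> * j'" using sig by simp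
      ultimately have "J \<le> \<sigma> * j'" by linarith
      then have "mpow n B (\<sigma> * j') j j = 1" using J by auto
      then have "mpow n B (\<rho> + \<sigma> * k) i j \<le> mpow n B (\<rho> + \<sigma> * k + \<sigma> * j') i j"
        using x by (intro mpow_mono_one) auto
      then show "mpow n B (\<rho> + \<sigma> * k) i j \<le> mpow n B (\<rho> + \<sigma> * (k + j')) i j"
        by (simp add: algebra_simps)
    qed
    then show "\<exists>K. \<forall>k\<ge>K. mpow n B (fst x + \<sigma> * k) (fst (snd x)) (snd (snd x))
         = mpow n B (fst x + \<sigma> * K) (fst (snd x)) (snd (snd x))" using x by simp
  qed
  from bchoice[OF key] obtain Kf where Kf: "\<forall>x\<in>X. \<forall>k\<ge>Kf x. mpow n B (fst x + \<sigma> * k) (fst (snd x)) (snd (snd x))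
         = mpow n B (fst x + \<sigma> * Kf x) (fst (snd x)) (snd (snd x))"
    by (elim exE)
  define K0 where "K0 = Max (Kf ` X)"
  have finX: "finite X" unfolding X_def by simp
  show ?thesis
  proof (intro exI[of _ "\<sigma> * K0"] allI impI ballI)
    fix t i j assume t: "\<sigma> * K0 \<le> t" and ij: "i \<in> {1..n}" "j \<in> {1..n}"
    define \<rho> where "\<rho> = t mod \<sigma>"
    define k where "k = t div \<sigma>"
    have tk: "t = \<rho> + \<sigma> * k" unfolding \<rho>_def k_def by simp
    have "\<sigma> * K0 div \<sigma> \<le> t div \<sigma>" by (rule div_le_mono[OF t])
    then have kK: "K0 \<le> k" unfolding k_def using sig by simp
    have xX: "(\<rho>, i, j) \<in> X" unfolding X_def \<rho>_def using ij sig by auto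
    have "Kf (\<rho>, i, j) \<le> K0" unfolding K0_def using finX xX by simp
    then have K1: "Kf (\<rho>, i, j) \<le> k" "Kf (\<rho>, i, j) \<le> k + 1" using kK by linarith+
    have KK: "\<forall>k\<ge>Kf (\<rho>,i,j). mpow n B (\<rho> + \<sigma> * k) i j = mpow n B (\<rho> + \<sigma> * Kf (\<rho>,i,j)) i j"
      using bspec[OF Kf xX] unfolding fst_conv snd_conv .
    have "mpow n B (\<rho> + \<sigma> * k) i j = mpow n B (\<rho> + \<sigma> * Kf (\<rho>,i,j)) i j"
      and "mpow n B (\<rho> + \<sigma> * (k+1)) i j = mpow n B (\<rho> + \<sigma> * Kf (\<rho>,i,j)) i j"
      using KK[rule_format, OF K1(1)] KK[rule_format, OF K1(2)] by -
    moreover have "t + \<sigma> = \<rho> + \<sigma> * (k+1)" using tk by simp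
    ultimately show "mpow n B (t + \<sigma>) i j = mpow n B t i j" using tk by metis
  qed
qed

lemma per_charac:
  assumes sig: "\<sigma> > 0"
    and diag: "\<And>j. j \<in> {1..n} \<Longrightarrow> \<exists>J. \<forall>l\<ge>J. \<sigma> dvd l \<longrightarrow> mpow n B l j j = 1"
    and w2: "\<And>t. mpow n B t 1 1 = 1 \<Longrightarrow> \<sigma> dvd t"
  shows "(LEAST s. s > 0 \<and> (\<exists>T. \<forall>t\<ge>T. \<forall>i\<in>{1..n}. \<forall>j\<in>{1..n}.
            mpow n B (t + s) i j = mpow n B t i j)) = \<sigma>"
proof (rule Least_equality)
  show "\<sigma> > 0 \<and> (\<exists>T. \<forall>t\<ge>T. \<forall>i\<in>{1..n}. \<forall>j\<in>{1..n}. mpow n B (t + \<sigma>) i j = mpow n B t i j)"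
    by (intro conjI sig periodic_ex[OF sig diag])
next
  fix s assume s: "s > 0 \<and> (\<exists>T. \<forall>t\<ge>T. \<forall>i\<in>{1..n}. \<forall>j\<in>{1..n}. mpow n B (t + s) i j = mpow n B t i j)"
  then obtain T where T: "\<forall>t\<ge>T. \<forall>i\<in>{1..n}. \<forall>j\<in>{1..n}. mpow n B (t + s) i j = mpow n B t i j"
    by blast
  have one: "1 \<in> {1..n}" using npos by simp
  obtain J where J: "\<forall>l\<ge>J. \<sigma> dvd l \<longrightarrow> mpow n B l 1 1 = 1" using diag[OF one] by blast
  define t where "t = \<sigma> * (T + J)"
  have "T + J \<le> \<sigma> * (T + J)" using sig by simp
  then have tT: "t \<ge> T" "t \<ge> J" unfolding t_def by linarith+
  have "mpow n B t 1 1 = 1" using J tT(2) unfolding t_def by simp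
  then have "mpow n B (t + s) 1 1 = 1" using T tT(1) one by simp
  then have "\<sigma> dvd t + s" by (rule w2)
  then have "\<sigma> dvd s" unfolding t_def using dvd_add_right_iff[of \<sigma> "\<sigma> * (T + J)" s] by simp
  then show "\<sigma> \<le> s" using s by (simp add: dvd_imp_le)
qed

end


definition closedw :: "(nat \<times> nat) set \<Rightarrow> nat list \<Rightarrow> bool" where
  "closedw E c \<longleftrightarrow> c \<noteq> [] \<and> (\<forall>k < length c. (c ! k, c ! ((k + 1) mod length c)) \<in> E)"

lemma cycle_in_closedw: "cycle_in E c \<Longrightarrow> closedw E c"
  unfolding cycle_in_def closedw_def by auto

lemma closedw_rotate:
  assumes "closedw E c"
  shows "closedw E (rotate i c)"
proof -
  let ?L = "length c"
  have L: "?L > 0" using assms unfolding closedw_def by simp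
  have "(rotate i c ! k, rotate i c ! ((k + 1) mod ?L)) \<in> E" if k: "k < ?L" for k
  proof -
    have e: "(c ! ((i + k) mod ?L), c ! (((i + k) mod ?L + 1) mod ?L)) \<in> E"
      using assms L unfolding closedw_def by simp
    have "((i + k) mod ?L + 1) mod ?L = (i + (k + 1) mod ?L) mod ?L"
      by (simp add: mod_Suc_eq mod_add_right_eq)
    then show ?thesis using e k L by (simp add: nth_rotate)
  qed
  then show ?thesis using assms unfolding closedw_def by simp
qed

lemma closedw_split:
  assumes cw: "closedw E c" and j: "0 < j" "j < length c" and eq: "c ! 0 = c ! j"
  shows "closedw E (take j c)" "closedw E (drop j c)"
proof -
  let ?L = "length c"
  have ed: "\<And>k. k < ?L \<Longrightarrow> (c ! k, c ! ((k + 1) mod ?L)) \<in> E" using cw unfolding closedw_def by simp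
  show "closedw E (take j c)"
    unfolding closedw_def
  proof (intro conjI allI impI)
    show "take j c \<noteq> []" using j by (cases c) auto
    fix k assume "k < length (take j c)"
    then have k: "k < j" using j by simp
    show "(take j c ! k, take j c ! ((k + 1) mod length (take j c))) \<in> E"
    proof (cases "k + 1 < j")
      case True
      then show ?thesis using ed[of k] j k by simp
    next
      case False
      then have "k + 1 = j" using k by simp
      then show ?thesis using ed[of k] j k eq by simp
    qed
  qed
  show "closedw E (drop j c)"
    unfolding closedw_def
  proof (intro conjI allI impI)
    show "drop j c \<noteq> []" using j by simp
    fix k assume "k < length (drop j c)"
    then have k: "j + k < ?L" by simp
    show "(drop j c ! k, drop j c ! ((k + 1) mod length (drop j c))) \<in> E"
    proof (cases "j + k + 1 < ?L")
      case True
      then show ?thesis using ed[of "j+k"] j k by (simp add: add.commute add.left_commute)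
    next
      case False
      then have kk: "j + k + 1 = ?L" using k by simp
      then have "k + 1 = length (drop j c)" by simp
      then have "(k + 1) mod length (drop j c) = 0" by (metis mod_self)
      moreover have "(j + k + 1) mod ?L = 0" using kk by simp
      ultimately show ?thesis using ed[of "j+k"] j k eq by simp
    qed
  qed
qed

lemma closedw_gcd:
  "closedw E c \<Longrightarrow> Gcd {length c' | c'. cycle_in E c'} dvd length c"
proof (induction "length c" arbitrary: c rule: less_induct)
  case less
  show ?case
  proof (cases "distinct c")
    case True
    then have "cycle_in E c" using less.prems unfolding closedw_def cycle_in_def by simp
    then show ?thesis by (intro Gcd_dvd) auto
  next
    case False
    then obtain i0 j0 where ij0: "i0 < length c" "j0 < length c" "i0 \<noteq> j0" "c ! i0 = c ! j0"
      unfolding distinct_conv_nth by blast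
    have "\<exists>i j. i < j \<and> j < length c \<and> c ! i = c ! j"
    proof (cases "i0 < j0")
      case True thus ?thesis using ij0 by blast
    next
      case False thus ?thesis using ij0 by (intro exI[of _ j0] exI[of _ i0]) auto
    qed
    then obtain i j where ij: "i < j" "j < length c" "c ! i = c ! j" by blast
    let ?c = "rotate i c"
    let ?L = "length c"
    have cw: "closedw E ?c" using closedw_rotate[OF less.prems] .
    have len: "length ?c = ?L" by simp
    have e0: "?c ! 0 = c ! i" using ij by (subst nth_rotate) auto
    have e1: "?c ! (j - i) = c ! j" using ij by (subst nth_rotate) auto
    have s: "closedw E (take (j - i) ?c)" "closedw E (drop (j - i) ?c)"
      using closedw_split[OF cw, of "j - i"] ij e0 e1 by auto
    have l1: "length (take (j - i) ?c) = j - i" using ij by simp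
    have l2: "length (drop (j - i) ?c) = ?L - (j - i)" by simp
    have d1: "Gcd {length c' | c'. cycle_in E c'} dvd j - i"
      using less.hyps[OF _ s(1)] unfolding l1 using ij by simp
    have d2: "Gcd {length c' | c'. cycle_in E c'} dvd ?L - (j - i)"
      using less.hyps[OF _ s(2)] unfolding l2 using ij by simp
    have "?L = (j - i) + (?L - (j - i))" using ij by simp
    with dvd_add[OF d1 d2] show ?thesis by simp
  qed
qed


lemma int_subgroup_mult:
  fixes Z :: "int set"
  assumes z0: "0 \<in> Z" and add: "\<And>x y. x \<in> Z \<Longrightarrow> y \<in> Z \<Longrightarrow> x + y \<in> Z"
    and neg: "\<And>x. x \<in> Z \<Longrightarrow> - x \<in> Z" and x: "x \<in> Z"
  shows "u * x \<in> Z"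
proof -
  have nat: "int k * x \<in> Z" for k
    by (induction k) (auto simp: z0 add x distrib_right)
  show ?thesis
  proof (cases "u \<ge> 0")
    case True then show ?thesis using nat[of "nat u"] by simp
  next
    case False then show ?thesis using neg[OF nat[of "nat (- u)"]] by simp
  qed
qed

lemma int_subgroup_Gcd:
  fixes Z :: "int set"
  assumes z0: "0 \<in> Z" and add: "\<And>x y. x \<in> Z \<Longrightarrow> y \<in> Z \<Longrightarrow> x + y \<in> Z"
    and neg: "\<And>x. x \<in> Z \<Longrightarrow> - x \<in> Z" and fin: "finite A"
    and sub: "\<And>a. a \<in> A \<Longrightarrow> int a \<in> Z"
  shows "int (Gcd A) \<in> Z"
  using fin sub
proof (induction A rule: finite_induct)
  case empty then show ?case using z0 by simp
next
  case (insert a A)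
  have IH: "int (Gcd A) \<in> Z" using insert by auto
  have a: "int a \<in> Z" using insert by auto
  obtain u v where uv: "u * int a + v * int (Gcd A) = gcd (int a) (int (Gcd A))"
    using bezout_int by blast
  have "u * int a + v * int (Gcd A) \<in> Z"
    by (intro add int_subgroup_mult[OF z0 add neg] a IH)
  then show ?case using uv by (simp add: gcd_int_int_eq)
qed

lemma ordd:
  fixes M x t :: nat
  assumes M: "0 < M"
  shows "(M div gcd M x dvd t) \<longleftrightarrow> (M dvd t * x)"
proof -
  define g where "g = gcd M x"
  have g0: "g > 0" using M unfolding g_def by simp
  obtain M' where M': "M = g * M'" unfolding g_def by (metis gcd_dvd1 dvdE)
  obtain x' where x': "x = g * x'" unfolding g_def by (metis gcd_dvd2 dvdE)
  have Mg: "M div g = M'" using M' g0 by simp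
  have xg: "x div g = x'" using x' g0 by simp
  have cop: "coprime M' x'"
    using div_gcd_coprime[of M x] M Mg xg unfolding g_def by simp
  have "M div g = M'" by (rule Mg)
  moreover have "(M dvd t * x) \<longleftrightarrow> (M' dvd t * x')"
    using M' x' g0 by (simp add: mult.left_commute)
  moreover have "(M' dvd t * x') \<longleftrightarrow> M' dvd t"
    using cop by (simp add: coprime_dvd_mult_left_iff)
  ultimately show ?thesis unfolding g_def by simp
qed


definition nd :: "nat \<Rightarrow> nat \<Rightarrow> nat" where "nd n u = u mod n + 1"

definition stepcyc :: "nat \<Rightarrow> nat \<Rightarrow> nat \<Rightarrow> nat list" where
  "stepcyc n u t = map (\<lambda>l. nd n (u + l * t)) [0..<n div gcd n t]"

lemma prod_eq_max:
  fixes f :: "'a \<Rightarrow> real"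
  assumes fin: "finite I" and bnd: "\<And>i. i \<in> I \<Longrightarrow> 0 \<le> f i \<and> f i \<le> L" and L: "L > 0"
    and eq: "prod f I = L ^ card I" and i: "i \<in> I"
  shows "f i = L"
proof (rule ccontr)
  assume "f i \<noteq> L"
  then have lt: "f i < L" using bnd[OF i] by simp
  have c: "card I > 0" using fin i card_gt_0_iff by blast
  have p1: "prod f I = f i * prod f (I - {i})" using prod.remove[OF fin i] by simp
  have p2: "prod f (I - {i}) \<le> L ^ card (I - {i})"
    using bnd prod_mono[of "I - {i}" f "\<lambda>_. L"] by (simp add: prod_constant)
  have p3: "card (I - {i}) = card I - 1" using fin i by simp
  have p4: "0 \<le> f i" using bnd[OF i] by simp
  have "prod f I \<le> f i * L ^ (card I - 1)" using p1 p2 p3 p4 by (simp add: mult_left_mono)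
  also have "\<dots> < L * L ^ (card I - 1)" using lt L by (intro mult_strict_right_mono) auto
  also have "\<dots> = L ^ card I" using c by (cases "card I") auto
  finally show False using eq by simp
qed

lemma nd_range: "n \<ge> 1 \<Longrightarrow> nd n u \<in> {1..n}"
  unfolding nd_def by (simp add: Suc_leI)

lemma nd_of: "x \<in> {1..n} \<Longrightarrow> nd n (x - 1) = x"
  unfolding nd_def by auto

lemma nd_mod: "nd n (u mod n) = nd n u" unfolding nd_def by simp

lemma nd_add_mult: "nd n (u + n * w) = nd n u" unfolding nd_def by simp

lemma circ_nd:
  assumes "n \<ge> 1"
  shows "circ n a (nd n u) (nd n (u + t)) = a (t mod n)"
proof -
  define r where "r = u mod n"
  have r: "r < n" unfolding r_def using assms by simp
  have "((u + t) mod n + 1 + n - (u mod n + 1)) mod n = ((r + t) mod n + (n - r)) mod n"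
    unfolding r_def using r r_def by (simp add: mod_add_left_eq)
  also have "\<dots> = (r + t + (n - r)) mod n" by (simp add: mod_add_left_eq)
  also have "\<dots> = (t + n) mod n" using r by simp
  also have "\<dots> = t mod n" by simp
  finally show ?thesis unfolding circ_def nd_def by simp
qed

lemma circ_on:
  assumes "x \<in> {1..n}" "y \<in> {1..n}"
  shows "nd n (x - 1 + (y + n - x) mod n) = y"
proof -
  have "(x - 1 + (y + n - x) mod n) mod n = (x - 1 + (y + n - x)) mod n"
    by (simp add: mod_add_right_eq)
  also have "x - 1 + (y + n - x) = (y - 1) + n" using assms by auto
  also have "((y - 1) + n) mod n = y - 1" using assms by (simp only: mod_add_self2) (auto intro!: mod_less)
  finally show ?thesis unfolding nd_def using assms by auto
qed

lemma qt_dvd: "(n::nat) dvd (n div gcd n t) * t"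
proof -
  have e1: "t * (n div gcd n t) = t * n div gcd n t" using div_mult_swap[of "gcd n t" n t] by simp
  have e2: "n * (t div gcd n t) = n * t div gcd n t" using div_mult_swap[of "gcd n t" t n] by simp
  have "(n div gcd n t) * t = n * (t div gcd n t)" using e1 e2 by (simp add: mult.commute)
  then show ?thesis by simp
qed

lemma nd_period: "nd n (u + (l mod (n div gcd n t)) * t) = nd n (u + l * t)"
proof -
  define q where "q = n div gcd n t"
  obtain w where w: "q * t = n * w" using qt_dvd[of n t] unfolding q_def by (metis dvdE)
  have "l * t = (l mod q) * t + n * (w * (l div q))"
  proof -
    have "l * t = (l mod q + q * (l div q)) * t" by (simp only: mod_mult_div_eq)
    also have "\<dots> = (l mod q) * t + (q * t) * (l div q)" by (simp only: distrib_right distrib_left ac_simps)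
    also have "\<dots> = (l mod q) * t + n * (w * (l div q))" unfolding w by (simp add: mult.assoc)
    finally show ?thesis .
  qed
  then have "u + l * t = (u + (l mod q) * t) + n * (w * (l div q))" by simp
  then show ?thesis unfolding q_def[symmetric] by (metis nd_add_mult)
qed

lemma q_pos: "(n::nat) \<ge> 1 \<Longrightarrow> 0 < n div gcd n t"
  using gcd_le1_nat[of n t] by (simp add: div_greater_zero_iff)

lemma stepcyc_inj:
  assumes n: "n \<ge> 1" and l: "l < n div gcd n t" "l' < n div gcd n t" and eq: "nd n (u + l * t) = nd n (u + l' * t)"
    and le: "l' \<le> l"
  shows "l = l'"
proof -
  have "(u + l * t) mod n = (u + l' * t) mod n" using eq unfolding nd_def by simp
  then have "n dvd (u + l * t) - (u + l' * t)" using le by (subst mod_eq_dvd_iff_nat[symmetric]) (auto intro: mult_le_mono1)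
  then have "n dvd (l - l') * t" by (simp add: diff_mult_distrib)
  then have "n div gcd n t dvd l - l'" using ordd[of n t "l - l'"] n by simp
  moreover have "l - l' < n div gcd n t" using l by linarith
  ultimately have "l - l' = 0" by (metis dvd_imp_le not_le neq0_conv)
  then show ?thesis using le by simp
qed

lemma stepcyc_props:
  assumes n: "n \<ge> 1"
  shows "stepcyc n u t \<noteq> []" "distinct (stepcyc n u t)"
    "length (stepcyc n u t) = n div gcd n t"
    "\<And>l. l < length (stepcyc n u t) \<Longrightarrow> stepcyc n u t ! l = nd n (u + l * t)"
    "\<And>l. l < length (stepcyc n u t) \<Longrightarrow>
        stepcyc n u t ! ((l + 1) mod length (stepcyc n u t)) = nd n ((u + l * t) + t)"
proof -
  let ?q = "n div gcd n t"
  show "length (stepcyc n u t) = ?q" unfolding stepcyc_def by simp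
  then show "stepcyc n u t \<noteq> []" using q_pos[OF n, of t] by auto
  show nth: "\<And>l. l < length (stepcyc n u t) \<Longrightarrow> stepcyc n u t ! l = nd n (u + l * t)"
    unfolding stepcyc_def by simp
  show "distinct (stepcyc n u t)"
    unfolding stepcyc_def distinct_map
  proof
    show "inj_on (\<lambda>l. nd n (u + l * t)) (set [0..<?q])"
    proof (rule inj_onI)
      fix l l' assume "l \<in> set [0..<?q]" "l' \<in> set [0..<?q]" "nd n (u + l * t) = nd n (u + l' * t)"
      then show "l = l'" using stepcyc_inj[OF n] by (metis atLeastLessThan_iff le_cases set_upt)
    qed
  qed simp
  fix l assume l: "l < length (stepcyc n u t)"
  have "stepcyc n u t ! ((l + 1) mod length (stepcyc n u t)) = nd n (u + ((l + 1) mod ?q) * t)"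
    using nth q_pos[OF n, of t] \<open>length (stepcyc n u t) = ?q\<close> by simp
  also have "\<dots> = nd n (u + (l + 1) * t)" by (rule nd_period)
  finally show "stepcyc n u t ! ((l + 1) mod length (stepcyc n u t)) = nd n ((u + l * t) + t)"
    by (simp add: algebra_simps)
qed


definition Lv :: "nat \<Rightarrow> (nat \<Rightarrow> real) \<Rightarrow> real" where "Lv n a = Max (a ` {..<n})"
definition CE :: "nat \<Rightarrow> (nat \<Rightarrow> real) \<Rightarrow> (nat \<times> nat) set" where
  "CE n a = {(x, y). x \<in> {1..n} \<and> y \<in> {1..n} \<and> circ n a x y = Lv n a}"

context
  fixes n :: nat and a :: "nat \<Rightarrow> real"
  assumes n1: "n \<ge> 1" and nonneg: "\<forall>t<n. a t \<ge> 0" and nonzero: "\<exists>t<n. a t \<noteq> 0"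
begin

lemma L_ge: assumes "t < n" shows "a t \<le> Lv n a"
proof -
  have "a t \<in> a ` {..<n}" using assms by simp
  moreover have "finite (a ` {..<n})" by simp
  ultimately show ?thesis unfolding Lv_def by (rule Max_ge[rotated])
qed

lemma L_attain: "\<exists>t0<n. a t0 = Lv n a"
proof -
  have "a 0 \<in> a ` {..<n}" using n1 by simp
  then have "Lv n a \<in> a ` {..<n}" unfolding Lv_def by (intro Max_in) auto
  then show ?thesis by auto
qed

lemma L_pos: "0 < Lv n a"
proof -
  obtain t where t: "t < n" "a t \<noteq> 0" using nonzero by blast
  then have "0 < a t" using nonneg by (simp add: less_le)
  then show ?thesis using L_ge[OF t(1)] by simp
qed

lemma circ_bnd: "0 \<le> circ n a x y \<and> circ n a x y \<le> Lv n a"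
proof -
  have "(y + n - x) mod n < n" using n1 by simp
  then show ?thesis unfolding circ_def using nonneg L_ge by auto
qed

lemma stepcyc_edge:
  assumes t: "t < n" and k: "k < length (stepcyc n u t)"
  shows "circ n a (stepcyc n u t ! k) (stepcyc n u t ! ((k + 1) mod length (stepcyc n u t))) = a t"
  using stepcyc_props(4,5)[OF n1 k] circ_nd[OF n1] t by simp

lemma stepcyc_cycle:
  assumes t: "t < n" "a t \<noteq> 0"
  shows "cycle_in (graph_edges n (circ n a)) (stepcyc n u t)"
  unfolding cycle_in_def graph_edges_def
proof (intro conjI allI impI)
  show "stepcyc n u t \<noteq> []" "distinct (stepcyc n u t)" using stepcyc_props[OF n1, of u t] by auto
  fix k assume k: "k < length (stepcyc n u t)"
  show "(stepcyc n u t ! k, stepcyc n u t ! ((k + 1) mod length (stepcyc n u t)))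
         \<in> {(i, j). i \<in> {1..n} \<and> j \<in> {1..n} \<and> circ n a i j \<noteq> 0}"
    using stepcyc_props(4,5)[OF n1 k] stepcyc_edge[OF t(1) k] t(2) nd_range[OF n1] by simp
qed

lemma stepcyc_mean:
  assumes t: "t < n"
  shows "cycle_mean (circ n a) (stepcyc n u t) = a t"
proof -
  let ?c = "stepcyc n u t"
  have "cycle_weight (circ n a) ?c = (\<Prod>k<length ?c. a t)"
    unfolding cycle_weight_def by (rule prod.cong) (use stepcyc_edge[OF t] in auto)
  also have "\<dots> = a t ^ length ?c" by simp
  finally show ?thesis
    unfolding cycle_mean_def using stepcyc_props(1)[OF n1, of u t] nonneg t
    by (simp add: real_root_pos2)
qed

lemma cycle_nodes: "cycle_in (graph_edges n (circ n a)) c \<Longrightarrow> set c \<subseteq> {1..n}"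
proof
  fix x assume c: "cycle_in (graph_edges n (circ n a)) c" and x: "x \<in> set c"
  then obtain k where k: "k < length c" "c ! k = x" by (auto simp: in_set_conv_nth)
  then show "x \<in> {1..n}" using c unfolding cycle_in_def graph_edges_def by auto
qed

lemma finite_cycles: "finite {c. cycle_in (graph_edges n (circ n a)) c}"
proof (rule finite_subset)
  show "{c. cycle_in (graph_edges n (circ n a)) c} \<subseteq> {xs. set xs \<subseteq> {1..n} \<and> length xs \<le> n}"
  proof
    fix c assume "c \<in> {c. cycle_in (graph_edges n (circ n a)) c}"
    then have c: "cycle_in (graph_edges n (circ n a)) c" by simp
    have "length c = card (set c)" using c unfolding cycle_in_def by (simp add: distinct_card)
    also have "\<dots> \<le> card {1..n}" using cycle_nodes[OF c] by (intro card_mono) auto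
    finally show "c \<in> {xs. set xs \<subseteq> {1..n} \<and> length xs \<le> n}" using cycle_nodes[OF c] by simp
  qed
qed (rule finite_lists_length_le, simp)

lemma mean_le: "c \<noteq> [] \<Longrightarrow> cycle_mean (circ n a) c \<le> Lv n a"
proof -
  assume c: "c \<noteq> []"
  have "cycle_weight (circ n a) c \<le> (\<Prod>k<length c. Lv n a)"
    unfolding cycle_weight_def using circ_bnd by (intro prod_mono) auto
  then have "cycle_weight (circ n a) c \<le> Lv n a ^ length c" by simp
  then have "root (length c) (cycle_weight (circ n a) c) \<le> root (length c) (Lv n a ^ length c)"
    using c by (intro real_root_le_mono) auto
  also have "\<dots> = Lv n a" using c L_pos by (simp add: real_root_pos2)
  finally show ?thesis unfolding cycle_mean_def .
qed

lemma mcm_eq: "mcm n (circ n a) = Lv n a"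
  unfolding mcm_def
proof (rule Max_eqI)
  show "finite (cycle_mean (circ n a) ` {c. cycle_in (graph_edges n (circ n a)) c})"
    using finite_cycles by simp
next
  fix y assume "y \<in> cycle_mean (circ n a) ` {c. cycle_in (graph_edges n (circ n a)) c}"
  then show "y \<le> Lv n a" using mean_le unfolding cycle_in_def by auto
next
  obtain t0 where t0: "t0 < n" "a t0 = Lv n a" using L_attain by blast
  then have "a t0 \<noteq> 0" using L_pos by simp
  then have "cycle_in (graph_edges n (circ n a)) (stepcyc n 0 t0)" using stepcyc_cycle t0 by simp
  moreover have "cycle_mean (circ n a) (stepcyc n 0 t0) = Lv n a" using stepcyc_mean t0 by simp
  ultimately show "Lv n a \<in> cycle_mean (circ n a) ` {c. cycle_in (graph_edges n (circ n a)) c}"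
    by (metis (mono_tags, lifting) image_eqI mem_Collect_eq)
qed

lemma crit_cycle_edges:
  assumes c: "critical_cycle n (circ n a) c" and k: "k < length c"
  shows "circ n a (c ! k) (c ! ((k + 1) mod length c)) = Lv n a"
proof -
  have cy: "cycle_in (graph_edges n (circ n a)) c" and m: "cycle_mean (circ n a) c = Lv n a"
    using c mcm_eq unfolding critical_cycle_def by auto
  have ne: "c \<noteq> []" using cy unfolding cycle_in_def by simp
  have W0: "0 \<le> cycle_weight (circ n a) c"
    unfolding cycle_weight_def using circ_bnd by (intro prod_nonneg) auto
  have "cycle_weight (circ n a) c = root (length c) (cycle_weight (circ n a) c) ^ length c"
    using ne W0 by (simp add: real_root_pow_pos2)
  also have "\<dots> = Lv n a ^ card {..<length c}" using m unfolding cycle_mean_def by simp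
  finally have eq: "(\<Prod>k<length c. circ n a (c ! k) (c ! ((k + 1) mod length c))) = Lv n a ^ card {..<length c}"
    unfolding cycle_weight_def .
  show ?thesis
    by (rule prod_eq_max[OF _ _ L_pos eq]) (use circ_bnd k in auto)
qed

lemma crit_edges_eq: "crit_edges n (circ n a) = CE n a"
proof
  show "crit_edges n (circ n a) \<subseteq> CE n a"
  proof
    fix e assume "e \<in> crit_edges n (circ n a)"
    then obtain c k where c: "critical_cycle n (circ n a) c" and k: "k < length c"
      and e: "e = (c ! k, c ! ((k + 1) mod length c))"
      unfolding crit_edges_def cycle_edges_def by auto
    have cy: "cycle_in (graph_edges n (circ n a)) c" using c unfolding critical_cycle_def by simp
    then have "e \<in> graph_edges n (circ n a)" using k e unfolding cycle_in_def by auto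
    then show "e \<in> CE n a" using crit_cycle_edges[OF c k] e unfolding CE_def graph_edges_def by auto
  qed
next
  show "CE n a \<subseteq> crit_edges n (circ n a)"
  proof
    fix e assume "e \<in> CE n a"
    then obtain x y where e: "e = (x, y)" "x \<in> {1..n}" "y \<in> {1..n}" "circ n a x y = Lv n a"
      unfolding CE_def by auto
    define t where "t = (y + n - x) mod n"
    have t: "t < n" unfolding t_def using n1 by simp
    have at: "a t = Lv n a" using e(4) unfolding circ_def t_def by simp
    then have at0: "a t \<noteq> 0" using L_pos by simp
    let ?c = "stepcyc n (x - 1) t"
    have cc: "critical_cycle n (circ n a) ?c"
      unfolding critical_cycle_def using stepcyc_cycle[OF t at0] stepcyc_mean[OF t] at mcm_eq by simp
    have l0: "0 < length ?c" using stepcyc_props(1)[OF n1] by auto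
    have "?c ! 0 = x" using stepcyc_props(4)[OF n1 l0] nd_of[OF e(2)] by simp
    moreover have "?c ! ((0 + 1) mod length ?c) = y"
      using stepcyc_props(5)[OF n1 l0] circ_on[OF e(2,3)] unfolding t_def by simp
    ultimately have "e \<in> cycle_edges ?c" unfolding cycle_edges_def using e(1) l0 by force
    then show "e \<in> crit_edges n (circ n a)" unfolding crit_edges_def using cc by auto
  qed
qed

lemma crit_nodes_eq: "crit_nodes n (circ n a) = {1..n}"
proof
  show "crit_nodes n (circ n a) \<subseteq> {1..n}"
    unfolding crit_nodes_def critical_cycle_def using cycle_nodes by auto
next
  show "{1..n} \<subseteq> crit_nodes n (circ n a)"
  proof
    fix x assume x: "x \<in> {1..n}"
    obtain t0 where t0: "t0 < n" "a t0 = Lv n a" using L_attain by blast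
    then have at0: "a t0 \<noteq> 0" using L_pos by simp
    let ?c = "stepcyc n (x - 1) t0"
    have cc: "critical_cycle n (circ n a) ?c"
      unfolding critical_cycle_def using stepcyc_cycle[OF t0(1) at0] stepcyc_mean[OF t0(1)] t0 mcm_eq by simp
    have l0: "0 < length ?c" using stepcyc_props(1)[OF n1] by auto
    have "?c ! 0 = x" using stepcyc_props(4)[OF n1 l0] nd_of[OF x] by simp
    then have "x \<in> set ?c" using l0 by (metis nth_mem)
    then show "x \<in> crit_nodes n (circ n a)" unfolding crit_nodes_def using cc by auto
  qed
qed

end


definition Sc :: "nat \<Rightarrow> nat \<Rightarrow> nat \<Rightarrow> nat set" where
  "Sc n m i = (\<lambda>k. i + k * m) ` {0..<n div m}"

definition ndz :: "nat \<Rightarrow> int \<Rightarrow> nat" where "ndz n z = nat (z mod int n) + 1"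

lemma ndz_nat: "ndz n (int u) = nd n u"
  unfolding ndz_def nd_def by (simp add: zmod_int[symmetric])

lemma ndz_per: "ndz n (w + int n * k) = ndz n w"
  unfolding ndz_def by simp

lemma ndz_mod: "ndz n (w mod int n + v) = ndz n (w + v)"
  unfolding ndz_def by (simp add: mod_add_left_eq)

lemma ndz_range: "n \<ge> 1 \<Longrightarrow> ndz n z \<in> {1..n}"
proof -
  assume n: "n \<ge> 1"
  have "z mod int n < int n" "0 \<le> z mod int n" using n by auto
  then show ?thesis unfolding ndz_def by auto
qed


lemma ndz_of: "x \<in> {1..n} \<Longrightarrow> ndz n (int x - 1) = x"
proof -
  assume x: "x \<in> {1..n}"
  have "int x - 1 = int (x - 1)" using x by auto
  then show ?thesis using nd_of[OF x] ndz_nat by metis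
qed

lemma ndz_dvd: "n \<ge> 1 \<Longrightarrow> int n dvd (w - (int (ndz n w) - 1))"
proof -
  assume n: "n \<ge> 1"
  have "int (ndz n w) - 1 = w mod int n" unfolding ndz_def
    using n by simp
  then show ?thesis by (simp add: mod_eq_dvd_iff[symmetric])
qed

lemma S_char:
  assumes m: "m \<ge> 1" "m dvd n" and i: "i \<in> {1..m}"
  shows "Sc n m i = {y \<in> {1..n}. int m dvd int y - int i}"
proof
  show "Sc n m i \<subseteq> {y \<in> {1..n}. int m dvd int y - int i}"
  proof
    fix y assume "y \<in> Sc n m i"
    then obtain k where k: "k < n div m" "y = i + k * m" unfolding Sc_def by auto
    obtain r where r: "n = m * r" using m by (metis dvdE)
    have rr: "n div m = r" using r m by simp
    have "k + 1 \<le> r" using k rr by simp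
    then have "(k + 1) * m \<le> r * m" by (rule mult_le_mono1)
    then have "y \<le> n" using k i r by (simp add: algebra_simps)
    moreover have "int y - int i = int m * int k" using k by simp
    ultimately show "y \<in> {y \<in> {1..n}. int m dvd int y - int i}" using i k by auto
  qed
next
  show "{y \<in> {1..n}. int m dvd int y - int i} \<subseteq> Sc n m i"
  proof
    fix y assume "y \<in> {y \<in> {1..n}. int m dvd int y - int i}"
    then have y: "y \<in> {1..n}" and d: "int m dvd int y - int i" by auto
    have iy: "i \<le> y"
    proof (rule ccontr)
      assume "\<not> i \<le> y"
      then have "0 < int i - int y" "int i - int y < int m" using i y by auto
      moreover have "int m dvd int i - int y" using d by (metis dvd_minus_iff minus_diff_eq)
      ultimately show False using zdvd_imp_le by fastforce
    qed
    then have "int m dvd int (y - i)" using d by (simp add: of_nat_diff)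
    then have "m dvd y - i" by presburger
    then obtain k where k: "y - i = m * k" by (metis dvdE)
    obtain r where r: "n = m * r" using m by (metis dvdE)
    have "y - i < n" using y i iy by auto
    then have "m * k < m * r" using k r by simp
    then have "k < n div m" using r m by simp
    moreover have "y = i + k * m" using k iy by (simp add: algebra_simps)
    ultimately show "y \<in> Sc n m i" unfolding Sc_def by auto
  qed
qed

context
  fixes n :: nat and a :: "nat \<Rightarrow> real" and p :: "nat list" and m :: nat
  assumes n1: "n \<ge> 1" and nonneg: "\<forall>t<n. a t \<ge> 0" and nonzero: "\<exists>t<n. a t \<noteq> 0"
    and p_set: "set p = {t \<in> {1..n-1}. a t = mcm n (circ n a)}"
    and m_def: "m = Gcd (insert n (set p))"
begin

lemma p_set': "set p = {t. 1 \<le> t \<and> t < n \<and> a t = Lv n a}"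
proof -
  have "mcm n (circ n a) = Lv n a" by (rule mcm_eq[OF n1 nonneg nonzero])
  then have "set p = {t \<in> {1..n-1}. a t = Lv n a}" using p_set by simp
  also have "\<dots> = {t. 1 \<le> t \<and> t < n \<and> a t = Lv n a}" using n1 by auto
  finally show ?thesis .
qed

lemma m_dvd: "m dvd n" "\<And>t. t \<in> set p \<Longrightarrow> m dvd t"
proof -
  show "m dvd n" unfolding m_def by (rule Gcd_dvd) simp
  fix t assume "t \<in> set p"
  then show "m dvd t" unfolding m_def by (intro Gcd_dvd) simp
qed

lemma m_pos: "m \<ge> 1"
proof -
  have "m \<noteq> 0" using m_dvd(1) n1 by auto
  then show ?thesis by simp
qed

lemma CE_step:
  assumes "(x, y) \<in> CE n a"
  shows "x \<in> {1..n}" "y \<in> {1..n}" "(y + n - x) mod n = 0 \<or> (y + n - x) mod n \<in> set p"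
    "int n dvd (int x - 1 + int ((y + n - x) mod n)) - (int y - 1)"
proof -
  show x: "x \<in> {1..n}" and y: "y \<in> {1..n}" using assms unfolding CE_def by auto
  define t where "t = (y + n - x) mod n"
  have "a t = Lv n a" using assms unfolding CE_def circ_def t_def by auto
  moreover have "t < n" unfolding t_def using n1 by simp
  ultimately show "(y + n - x) mod n = 0 \<or> (y + n - x) mod n \<in> set p"
    unfolding t_def[symmetric] p_set' by auto
  have "nd n (x - 1 + t) = y" using circ_on[OF x y] unfolding t_def .
  then have "ndz n (int x - 1 + int t) = y" using x by (metis ndz_nat of_nat_add of_nat_diff of_nat_1 atLeastAtMost_iff)
  then show "int n dvd (int x - 1 + int ((y + n - x) mod n)) - (int y - 1)"
    using ndz_dvd[OF n1, of "int x - 1 + int t"] unfolding t_def by simp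
qed

lemma CE_in_S:
  assumes "(x, y) \<in> CE n a"
  shows "int m dvd int y - int x"
proof -
  define t where "t = (y + n - x) mod n"
  have "int m dvd int t"
    using CE_step(3)[OF assms] m_dvd unfolding t_def[symmetric] by auto
  moreover have "int m dvd (int x - 1 + int t) - (int y - 1)"
    using CE_step(4)[OF assms] m_dvd(1) unfolding t_def[symmetric] by (meson dvd_trans int_dvd_int_iff)
  ultimately have "int m dvd int t - ((int x - 1 + int t) - (int y - 1))" by (rule dvd_diff)
  then show ?thesis by simp
qed

lemma step_edge:
  assumes x: "x \<in> {1..n}" and t: "t \<in> set p"
  shows "(x, ndz n (int x - 1 + int t)) \<in> CE n a"
proof -
  have tn: "t < n" "a t = Lv n a" using t p_set' by auto
  have e: "ndz n (int x - 1 + int t) = nd n (x - 1 + t)" using x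
    by (metis ndz_nat of_nat_add of_nat_diff of_nat_1 atLeastAtMost_iff)
  have "circ n a (nd n (x - 1)) (nd n (x - 1 + t)) = a t" using circ_nd[OF n1] tn by simp
  then show ?thesis unfolding CE_def e using nd_of[OF x] x nd_range[OF n1] tn by auto
qed

lemma strongly_conn:
  assumes i: "i \<in> {1..m}"
  shows "strongly_connected_on (CE n a) (Sc n m i)"
proof -
  let ?S = "Sc n m i"
  let ?R = "CE n a \<inter> ?S \<times> ?S"
  have Sch: "?S = {y \<in> {1..n}. int m dvd int y - int i}" using S_char[OF m_pos m_dvd(1) i] .
  have inS: "ndz n (int x - 1 + z) \<in> ?S" if x: "x \<in> ?S" and z: "int m dvd z" for x z
  proof -
    let ?y = "ndz n (int x - 1 + z)"
    have "int n dvd (int x - 1 + z) - (int ?y - 1)" by (rule ndz_dvd[OF n1])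
    then have "int m dvd (int x - 1 + z) - (int ?y - 1)" using m_dvd(1) by (meson dvd_trans int_dvd_int_iff)
    moreover have "int m dvd int x - int i" using x Sch by auto
    ultimately have "int m dvd (int x - int i) + z - ((int x - 1 + z) - (int ?y - 1))"
      using z by (metis dvd_add dvd_diff)
    moreover have "(int x - int i) + z - ((int x - 1 + z) - (int ?y - 1)) = int ?y - int i" by simp
    ultimately have "int m dvd int ?y - int i" by simp
    then show ?thesis using Sch ndz_range[OF n1] by auto
  qed
  define Z where "Z = {z :: int. int m dvd z \<and> (\<forall>x\<in>?S. (x, ndz n (int x - 1 + z)) \<in> ?R\<^sup>*)}"
  have Sn: "?S \<subseteq> {1..n}" using Sch by auto
  have z0: "0 \<in> Z" unfolding Z_def using ndz_of Sn by auto
  have zadd: "z1 + z2 \<in> Z" if "z1 \<in> Z" "z2 \<in> Z" for z1 z2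
  proof -
    have d: "int m dvd z1 + z2" using that unfolding Z_def by auto
    have "(x, ndz n (int x - 1 + (z1 + z2))) \<in> ?R\<^sup>*" if x: "x \<in> ?S" for x
    proof -
      let ?w = "ndz n (int x - 1 + z1)"
      have w: "?w \<in> ?S" using inS x that(1) \<open>z1 \<in> Z\<close> unfolding Z_def by auto
      have r1: "(x, ?w) \<in> ?R\<^sup>*" using \<open>z1 \<in> Z\<close> x unfolding Z_def by auto
      have r2: "(?w, ndz n (int ?w - 1 + z2)) \<in> ?R\<^sup>*" using \<open>z2 \<in> Z\<close> w unfolding Z_def by auto
      have "int ?w - 1 = (int x - 1 + z1) mod int n" unfolding ndz_def using n1 by simp
      then have "ndz n (int ?w - 1 + z2) = ndz n (int x - 1 + (z1 + z2))"
        using ndz_mod[of n "int x - 1 + z1" z2] by (simp add: add.assoc)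
      then show ?thesis using r1 r2 by simp
    qed
    then show ?thesis using d unfolding Z_def by auto
  qed
  have zn: "int n * k \<in> Z" for k
    unfolding Z_def using m_dvd(1) ndz_per[of n "int x - 1" k for x] ndz_of Sn
    by (auto simp: add.assoc)
  have znat: "int k * z \<in> Z" if "z \<in> Z" for k z
    by (induction k) (auto simp: z0 zadd that distrib_right)
  have zneg: "- z \<in> Z" if z: "z \<in> Z" for z
  proof -
    have "int (n - 1) * z + int n * (- z) \<in> Z" using zadd znat[OF z] zn by blast
    moreover have "int (n - 1) * z + int n * (- z) = - z" using n1 by (simp add: of_nat_diff algebra_simps)
    ultimately show ?thesis by simp
  qed
  have zp: "int t \<in> Z" if "t \<in> insert n (set p)" for t
  proof (cases "t = n")
    case True then show ?thesis using zn[of 1] by simp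
  next
    case False
    then have t: "t \<in> set p" using that by simp
    have "(x, ndz n (int x - 1 + int t)) \<in> ?R\<^sup>*" if x: "x \<in> ?S" for x
    proof -
      have "(x, ndz n (int x - 1 + int t)) \<in> CE n a" using step_edge[OF _ t] x Sn by auto
      moreover have "ndz n (int x - 1 + int t) \<in> ?S" using inS[OF x] m_dvd(2)[OF t] by auto
      ultimately show ?thesis using x by auto
    qed
    then show ?thesis unfolding Z_def using m_dvd(2)[OF t] by auto
  qed
  have mZ: "int m \<in> Z" unfolding m_def
    by (rule int_subgroup_Gcd[OF z0 zadd zneg]) (use zp in auto)
  show ?thesis
    unfolding strongly_connected_on_def
  proof (intro conjI ballI)
    have "i \<in> ?S" using Sch i m_dvd n1 by (auto intro: order_trans[OF _ dvd_imp_le])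
    then show "?S \<noteq> {}" by auto
  next
    fix x y assume x: "x \<in> ?S" and y: "y \<in> ?S"
    have "int m dvd int y - int x"
    proof -
      have dy: "int m dvd int y - int i" using y Sch by auto
      have dx: "int m dvd int x - int i" using x Sch by auto
      from dvd_diff[OF dy dx] show ?thesis by simp
    qed
    then obtain k where k: "int y - int x = int m * k" by (metis dvdE)
    have "int m * k \<in> Z" using int_subgroup_mult[OF z0 zadd zneg mZ, of k] by (simp add: mult.commute)
    then have "(x, ndz n (int x - 1 + int m * k)) \<in> ?R\<^sup>*" using x unfolding Z_def by auto
    moreover have "int x - 1 + int m * k = int y - 1" using k by simp
    ultimately show "(x, y) \<in> ?R\<^sup>*" using ndz_of y Sn by auto
  qed
qed

end


context
  fixes n :: nat and a :: "nat \<Rightarrow> real" and p :: "nat list" and m :: nat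
  assumes n1: "n \<ge> 1" and nonneg: "\<forall>t<n. a t \<ge> 0" and nonzero: "\<exists>t<n. a t \<noteq> 0"
    and p_set: "set p = {t \<in> {1..n-1}. a t = mcm n (circ n a)}"
    and m_def: "m = Gcd (insert n (set p))"
begin

lemmas Sch = S_char[OF m_pos[OF n1 nonneg nonzero p_set m_def] m_dvd(1)[OF n1 nonneg nonzero p_set m_def]]

lemma cover: "x \<in> {1..n} \<Longrightarrow> x \<in> Sc n m ((x - 1) mod m + 1)"
proof -
  assume x: "x \<in> {1..n}"
  have m: "m \<ge> 1" using m_pos[OF n1 nonneg nonzero p_set m_def] .
  let ?i = "(x - 1) mod m + 1"
  have i: "?i \<in> {1..m}" using m by (simp add: Suc_leI)
  have le: "?i \<le> x" using x by (metis Suc_eq_plus1 Suc_le_mono atLeastAtMost_iff le_diff_iff' le_add_diff_inverse2 mod_less_eq_dividend le_SucE Suc_diff_1 order.trans le_refl)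
  have "x - ?i = (x - 1) - (x - 1) mod m" using x by auto
  also have "\<dots> = m * ((x - 1) div m)" by (simp add: minus_mod_eq_mult_div)
  finally have "int (x - ?i) = int m * int ((x - 1) div m)" by simp
  then have "int x - int ?i = int m * int ((x - 1) div m)" using le by (simp only: of_nat_diff)
  then have "int m dvd int x - int ?i" by simp
  then show ?thesis using Sch[OF i] x by auto
qed

lemma Sc_sub: "i \<in> {1..m} \<Longrightarrow> Sc n m i \<subseteq> {1..n}"
  using Sch by auto

lemma disj: "i \<in> {1..m} \<Longrightarrow> j \<in> {1..m} \<Longrightarrow> i \<noteq> j \<Longrightarrow> Sc n m i \<inter> Sc n m j = {}"
proof (rule ccontr)
  assume i: "i \<in> {1..m}" and j: "j \<in> {1..m}" and ij: "i \<noteq> j" and ne: "Sc n m i \<inter> Sc n m j \<noteq> {}"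
  then obtain x where "x \<in> Sc n m i" "x \<in> Sc n m j" by auto
  then have d1: "int m dvd int x - int i" and d2: "int m dvd int x - int j" using Sch[OF i] Sch[OF j] by auto
  from dvd_diff[OF d1 d2] have d: "int m dvd int j - int i" by simp
  show False
  proof (cases "i < j")
    case True
    then have "0 < int j - int i" "int j - int i < int m" using i j by auto
    then show False using d zdvd_imp_le by fastforce
  next
    case False
    then have "0 < int i - int j" "int i - int j < int m" using i j ij by auto
    moreover have "int m dvd int i - int j" using d by (metis dvd_minus_iff minus_diff_eq)
    ultimately show False using zdvd_imp_le by fastforce
  qed
qed

lemma nodes_union: "crit_nodes n (circ n a) = (\<Union>i\<in>{1..m}. Sc n m i)"
proof -
  have m: "m \<ge> 1" using m_pos[OF n1 nonneg nonzero p_set m_def] .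
  have "{1..n} \<subseteq> (\<Union>i\<in>{1..m}. Sc n m i)"
  proof
    fix x assume x: "x \<in> {1..n}"
    have "(x - 1) mod m + 1 \<in> {1..m}" using m by (simp add: Suc_leI)
    then show "x \<in> (\<Union>i\<in>{1..m}. Sc n m i)" using cover[OF x] by blast
  qed
  moreover have "(\<Union>i\<in>{1..m}. Sc n m i) \<subseteq> {1..n}" using Sc_sub by blast
  ultimately show ?thesis using crit_nodes_eq[OF n1 nonneg nonzero] by blast
qed

lemma edges_in: "crit_edges n (circ n a) \<subseteq> (\<Union>i\<in>{1..m}. Sc n m i \<times> Sc n m i)"
proof
  fix e assume "e \<in> crit_edges n (circ n a)"
  then have "e \<in> CE n a" using crit_edges_eq[OF n1 nonneg nonzero] by auto
  then obtain x y where e: "e = (x, y)" "(x, y) \<in> CE n a" by (cases e) auto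
  have m: "m \<ge> 1" using m_pos[OF n1 nonneg nonzero p_set m_def] .
  have x: "x \<in> {1..n}" and y: "y \<in> {1..n}" using CE_step[OF n1 nonneg nonzero p_set m_def e(2)] by auto
  let ?i = "(x - 1) mod m + 1"
  have i: "?i \<in> {1..m}" using m by (simp add: Suc_leI)
  have xs: "x \<in> Sc n m ?i" using cover[OF x] .
  have d1: "int m dvd int x - int ?i" using xs Sch[OF i] by auto
  have d2: "int m dvd int y - int x" using CE_in_S[OF n1 nonneg nonzero p_set m_def e(2)] .
  have "int y - int ?i = (int y - int x) + (int x - int ?i)" by simp
  with dvd_add[OF d2 d1] have "int m dvd int y - int ?i" by metis
  then have "y \<in> Sc n m ?i" using Sch[OF i] y by auto
  then show "e \<in> (\<Union>i\<in>{1..m}. Sc n m i \<times> Sc n m i)" using xs i e by blast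
qed

lemma iso:
  assumes i: "i \<in> {1..m}" and j: "j \<in> {1..m}"
  shows "\<exists>f. bij_betw f (Sc n m i) (Sc n m j) \<and>
          (\<forall>x \<in> Sc n m i. \<forall>y \<in> Sc n m i. (x, y) \<in> crit_edges n (circ n a) \<longleftrightarrow>
                                 (f x, f y) \<in> crit_edges n (circ n a))"
proof (intro exI conjI)
  let ?f = "\<lambda>x. x + j - i"
  have ge: "\<And>x. x \<in> Sc n m i \<Longrightarrow> i \<le> x" unfolding Sc_def by auto
  have img: "?f ` Sc n m i = Sc n m j"
  proof -
    have "?f ` Sc n m i = (\<lambda>k. ?f (i + k * m)) ` {0..<n div m}" unfolding Sc_def by (simp add: image_image)
    also have "\<dots> = (\<lambda>k. j + k * m) ` {0..<n div m}" by (rule image_cong) auto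
    finally show ?thesis unfolding Sc_def .
  qed
  have inj: "inj_on ?f (Sc n m i)"
  proof (rule inj_onI)
    fix x y assume "x \<in> Sc n m i" "y \<in> Sc n m i" "x + j - i = y + j - i"
    then show "x = y" using ge[of x] ge[of y] by simp
  qed
  show "bij_betw ?f (Sc n m i) (Sc n m j)" unfolding bij_betw_def using inj img by simp
  show "\<forall>x \<in> Sc n m i. \<forall>y \<in> Sc n m i. (x, y) \<in> crit_edges n (circ n a) \<longleftrightarrow>
                                 (?f x, ?f y) \<in> crit_edges n (circ n a)"
  proof (intro ballI)
    fix x y assume x: "x \<in> Sc n m i" and y: "y \<in> Sc n m i"
    have fx: "?f x \<in> Sc n m j" "?f y \<in> Sc n m j" using img x y by auto
    have N: "x \<in> {1..n}" "y \<in> {1..n}" "?f x \<in> {1..n}" "?f y \<in> {1..n}"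
      using Sc_sub[OF i] Sc_sub[OF j] x y fx by auto
    have "?f y + n - ?f x = y + n - x" using ge[OF x] ge[OF y] by simp
    then have "circ n a (?f x) (?f y) = circ n a x y" unfolding circ_def by simp
    then show "(x, y) \<in> crit_edges n (circ n a) \<longleftrightarrow> (?f x, ?f y) \<in> crit_edges n (circ n a)"
      unfolding crit_edges_eq[OF n1 nonneg nonzero] CE_def using N by auto
  qed
qed

end


definition Bm :: "nat \<Rightarrow> (nat \<Rightarrow> real) \<Rightarrow> nat \<Rightarrow> nat \<Rightarrow> real" where
  "Bm n a = (\<lambda>i j. circ n a i j / mcm n (circ n a))"

definition wl :: "nat \<Rightarrow> nat \<Rightarrow> nat list \<Rightarrow> nat list" where
  "wl n u ss = map (\<lambda>k. nd n (u + sum_list (take k ss))) [0..<length ss]"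

lemma mult_one:
  fixes x y :: real
  assumes "0 \<le> x" "x \<le> 1" "0 \<le> y" "y \<le> 1" "x * y = 1"
  shows "x = 1" "y = 1"
proof -
  have h1: "x * y \<le> x" by (rule mult_left_le[OF assms(4,1)])
  have h2: "x * y \<le> y" by (rule mult_left_le_one_le[OF assms(3,1,2)])
  show "x = 1" using h1 assms(2,5) by linarith
  show "y = 1" using h2 assms(4,5) by linarith
qed

lemma dvd_sum_list_all: "(\<forall>s\<in>set xs. (m::nat) dvd s) \<Longrightarrow> m dvd sum_list xs"
  by (induction xs) auto

context
  fixes n :: nat and a :: "nat \<Rightarrow> real" and p :: "nat list" and m :: nat
  assumes n1: "n \<ge> 1" and nonneg: "\<forall>t<n. a t \<ge> 0" and nonzero: "\<exists>t<n. a t \<noteq> 0"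
    and p_set: "set p = {t \<in> {1..n-1}. a t = mcm n (circ n a)}"
    and m_def: "m = Gcd (insert n (set p))"
begin

lemma Bm_bnd: "0 \<le> Bm n a i j \<and> Bm n a i j \<le> 1"
  unfolding Bm_def mcm_eq[OF n1 nonneg nonzero]
  using circ_bnd[OF n1 nonneg nonzero, of i j] L_pos[OF n1 nonneg nonzero]
  by (auto simp: divide_le_eq_1)

lemma Bnn: "0 \<le> Bm n a i j" and Ble: "Bm n a i j \<le> 1" using Bm_bnd by auto

lemma Bm_one: "x \<in> {1..n} \<Longrightarrow> y \<in> {1..n} \<Longrightarrow> (Bm n a x y = 1) \<longleftrightarrow> (x, y) \<in> CE n a"
  unfolding Bm_def mcm_eq[OF n1 nonneg nonzero] CE_def using L_pos[OF n1 nonneg nonzero] by auto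

lemmas B_nn = mpow_nn[where B="Bm n a", OF n1 Bnn Ble]
lemmas B_le1 = mpow_le1[where B="Bm n a", OF n1 Bnn Ble]
lemmas B_1 = mpow_1[where B="Bm n a", OF n1 Bnn Ble]
lemmas B_mult = mpow_mult[where B="Bm n a", OF n1 Bnn Ble]
lemmas B_one_add = mpow_one_add[where B="Bm n a", OF n1 Bnn Ble]
lemmas B_Suc_ex = mpow_Suc_ex[where B="Bm n a", OF n1 Bnn Ble]
lemmas B_Suc_ge = mpow_Suc_ge[where B="Bm n a", OF n1 Bnn Ble]

lemma Lv_step: "s \<in> set p \<Longrightarrow> s < n \<and> a s = Lv n a"
  using p_set'[OF n1 nonneg nonzero p_set m_def] by auto

lemma steps_mpow:
  "set ss \<subseteq> set p \<Longrightarrow> mpow n (Bm n a) (length ss) (nd n u) (nd n (u + sum_list ss)) = 1"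
proof (induction ss arbitrary: u)
  case Nil then show ?case by simp
next
  case (Cons s ss)
  have s: "s < n" "a s = Lv n a" using Cons.prems Lv_step by auto
  have IH: "mpow n (Bm n a) (length ss) (nd n (u + s)) (nd n (u + s + sum_list ss)) = 1"
    using Cons by auto
  have N: "nd n u \<in> {1..n}" "nd n (u + s) \<in> {1..n}" "nd n (u + s + sum_list ss) \<in> {1..n}"
    using nd_range[OF n1] by auto
  have "Bm n a (nd n u) (nd n (u + s)) = 1"
    unfolding Bm_def mcm_eq[OF n1 nonneg nonzero] circ_nd[OF n1] using s L_pos[OF n1 nonneg nonzero] by simp
  then have "mpow n (Bm n a) 1 (nd n u) (nd n (u + s)) = 1" using B_1 N by simp
  then have "mpow n (Bm n a) (1 + length ss) (nd n u) (nd n (u + s + sum_list ss)) = 1"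
    using B_one_add[OF N] IH by blast
  then show ?case by (simp add: add.assoc)
qed

lemma closed_steps:
  assumes "set ss \<subseteq> set p" "n dvd sum_list ss" "j \<in> {1..n}"
  shows "mpow n (Bm n a) (length ss) j j = 1"
proof -
  obtain w where w: "sum_list ss = n * w" using assms(2) by (metis dvdE)
  have "mpow n (Bm n a) (length ss) (nd n (j - 1)) (nd n (j - 1 + sum_list ss)) = 1"
    using steps_mpow[OF assms(1)] .
  then show ?thesis using nd_of[OF assms(3)] w nd_add_mult by metis
qed

lemma cycle_mpow:
  assumes c: "closedw (CE n a) c"
  shows "mpow n (Bm n a) (length c) (c ! 0) (c ! 0) = 1"
proof -
  let ?L = "length c"
  have L: "?L > 0" using c unfolding closedw_def by simp
  have ed: "\<And>k. k < ?L \<Longrightarrow> (c ! k, c ! ((k + 1) mod ?L)) \<in> CE n a" using c unfolding closedw_def by simp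
  have N: "\<And>k. k < ?L \<Longrightarrow> c ! k \<in> {1..n}" using ed unfolding CE_def by auto
  have "l \<le> ?L \<Longrightarrow> mpow n (Bm n a) l (c ! 0) (c ! (l mod ?L)) = 1" for l
  proof (induction l)
    case 0 then show ?case by simp
  next
    case (Suc l)
    then have l: "l < ?L" by simp
    have e: "(c ! l, c ! (Suc l mod ?L)) \<in> CE n a" using ed[OF l] by simp
    have B1: "Bm n a (c ! l) (c ! (Suc l mod ?L)) = 1" using Bm_one e unfolding CE_def by auto
    have IH: "mpow n (Bm n a) l (c ! 0) (c ! l) = 1" using Suc l by simp
    have "mpow n (Bm n a) l (c ! 0) (c ! l) * Bm n a (c ! l) (c ! (Suc l mod ?L)) \<le> mpow n (Bm n a) (Suc l) (c ! 0) (c ! (Suc l mod ?L))"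
      by (rule B_Suc_ge) (use N l in auto)
    then have "1 \<le> mpow n (Bm n a) (Suc l) (c ! 0) (c ! (Suc l mod ?L))" using IH B1 by simp
    moreover have "mpow n (Bm n a) (Suc l) (c ! 0) (c ! (Suc l mod ?L)) \<le> 1"
      by (rule B_le1) (use N L in auto)
    ultimately show ?case by simp
  qed
  from this[of ?L] show ?thesis by simp
qed

lemma nd_in_S:
  assumes i: "i \<in> {1..m}" and x: "x \<in> Sc n m i" and w: "m dvd w"
  shows "nd n (x - 1 + w) \<in> Sc n m i"
proof -
  have mp: "m \<ge> 1" "m dvd n" using m_pos[OF n1 nonneg nonzero p_set m_def] m_dvd[OF n1 nonneg nonzero p_set m_def] by auto
  have Sch: "Sc n m i = {y \<in> {1..n}. int m dvd int y - int i}" using S_char[OF mp i] .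
  have x1: "x \<in> {1..n}" "int m dvd int x - int i" using x Sch by auto
  let ?y = "nd n (x - 1 + w)"
  have "int n dvd (int (x - 1 + w)) - (int ?y - 1)"
  proof -
    have "int ?y - 1 = int ((x - 1 + w) mod n)" unfolding nd_def by simp
    then show ?thesis by (simp add: zmod_int mod_eq_dvd_iff[symmetric])
  qed
  then have d1: "int m dvd (int (x - 1 + w)) - (int ?y - 1)" using mp by (meson dvd_trans int_dvd_int_iff)
  have d2: "int m dvd int w" using w by simp
  have e: "int (x - 1 + w) = int x - 1 + int w" using x1 by simp
  have "int ?y - int i = (int x - int i) + int w - (int (x - 1 + w) - (int ?y - 1))" using e by simp
  then have "int m dvd int ?y - int i" using d1 d2 x1(2) by (metis dvd_add dvd_diff)
  then show ?thesis using Sch nd_range[OF n1] by auto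
qed

lemma wl_closedw:
  assumes i: "i \<in> {1..m}" and ne: "ss \<noteq> []" and ss: "set ss \<subseteq> set p" and sn: "n dvd sum_list ss"
  shows "closedw (CE n a \<inter> Sc n m i \<times> Sc n m i) (wl n (i - 1) ss)" "length (wl n (i - 1) ss) = length ss"
proof -
  show len: "length (wl n (i - 1) ss) = length ss" unfolding wl_def by simp
  have mp: "m \<ge> 1" "m dvd n" using m_pos[OF n1 nonneg nonzero p_set m_def] m_dvd[OF n1 nonneg nonzero p_set m_def] by auto
  have "m \<le> n" using mp n1 by (simp add: dvd_imp_le)
  then have iS: "i \<in> Sc n m i" using S_char[OF mp i] i by auto
  have mdv: "m dvd sum_list (take k ss)" for k
  proof -
    have "\<forall>s\<in>set (take k ss). m dvd s"
    proof
      fix s assume "s \<in> set (take k ss)"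
      then have "s \<in> set p" using ss set_take_subset by fast
      then show "m dvd s" by (rule m_dvd(2)[OF n1 nonneg nonzero p_set m_def])
    qed
    then show ?thesis by (rule dvd_sum_list_all)
  qed
  have inS: "nd n (i - 1 + sum_list (take k ss)) \<in> Sc n m i" for k using nd_in_S[OF i iS mdv] .
  let ?L = "length ss"
  show "closedw (CE n a \<inter> Sc n m i \<times> Sc n m i) (wl n (i - 1) ss)"
    unfolding closedw_def len
  proof (intro conjI allI impI)
    show "wl n (i - 1) ss \<noteq> []" using ne unfolding wl_def by simp
    fix k assume k: "k < ?L"
    let ?u = "i - 1 + sum_list (take k ss)"
    have "ss ! k \<in> set p" using ss k nth_mem by blast
    then have s: "ss ! k < n" "a (ss ! k) = Lv n a" using Lv_step by auto
    have nxt: "wl n (i - 1) ss ! ((k + 1) mod ?L) = nd n (?u + ss ! k)"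
    proof (cases "k + 1 < ?L")
      case True
      then show ?thesis unfolding wl_def using k by (simp add: take_Suc_conv_app_nth add.assoc)
    next
      case False
      then have kk: "k + 1 = ?L" using k by simp
      obtain w where w: "sum_list ss = n * w" using sn by (metis dvdE)
      have "take (Suc k) ss = ss" using kk by simp
      moreover have "sum_list (take (Suc k) ss) = sum_list (take k ss) + ss ! k"
        using take_Suc_conv_app_nth[OF k] by simp
      ultimately have "sum_list (take k ss) + ss ! k = sum_list ss" by simp
      then have "nd n (?u + ss ! k) = nd n (i - 1 + n * w)" using w by (simp add: add.assoc)
      then show ?thesis unfolding wl_def using kk ne nd_add_mult by simp
    qed
    have cur: "wl n (i - 1) ss ! k = nd n ?u" unfolding wl_def using k by simp
    have e: "(nd n ?u, nd n (?u + ss ! k)) \<in> CE n a"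
      unfolding CE_def using circ_nd[OF n1, of a ?u "ss ! k"] s nd_range[OF n1] by auto
    have "nd n (?u + ss ! k) = nd n (i - 1 + sum_list (take (Suc k) ss))"
      using take_Suc_conv_app_nth[OF k] by (simp add: add.assoc)
    then have "nd n (?u + ss ! k) \<in> Sc n m i" using inS by simp
    then show "(wl n (i - 1) ss ! k, wl n (i - 1) ss ! ((k + 1) mod ?L)) \<in> CE n a \<inter> Sc n m i \<times> Sc n m i"
      using cur nxt e inS by simp
  qed
qed

end


lemma closedw_mono: "closedw E c \<Longrightarrow> E \<subseteq> E' \<Longrightarrow> closedw E' c"
  unfolding closedw_def by blast

lemma sum_list_rep: "sum_list (concat (replicate k ss)) = k * sum_list (ss :: nat list)"
  by (induction k) auto

lemma length_rep: "length (concat (replicate k ss)) = k * length ss"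
  by (induction k) auto

lemma set_rep: "set (concat (replicate k ss)) \<subseteq> set ss"
  by (induction k) auto

context
  fixes n :: nat and a :: "nat \<Rightarrow> real" and p :: "nat list" and m :: nat
  assumes n1: "n \<ge> 1" and nonneg: "\<forall>t<n. a t \<ge> 0" and nonzero: "\<exists>t<n. a t \<noteq> 0"
    and p_sorted: "sorted_wrt (>) p"
    and p_set: "set p = {t \<in> {1..n-1}. a t = mcm n (circ n a)}"
    and m_def: "m = Gcd (insert n (set p))"
begin

lemmas B_nn_9 = B_nn[OF n1 nonneg nonzero p_set m_def]
lemmas B_le1_9 = B_le1[OF n1 nonneg nonzero p_set m_def]
lemmas B_1_9 = B_1[OF n1 nonneg nonzero p_set m_def]
lemmas B_one_add_9 = B_one_add[OF n1 nonneg nonzero p_set m_def]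
lemmas B_Suc_ex_9 = B_Suc_ex[OF n1 nonneg nonzero p_set m_def]
lemmas Bnn_9 = Bnn[OF n1 nonneg nonzero p_set m_def]
lemmas Ble_9 = Ble[OF n1 nonneg nonzero p_set m_def]
lemmas Bm_one_9 = Bm_one[OF n1 nonneg nonzero p_set m_def]
lemmas closed_steps_9 = closed_steps[OF n1 nonneg nonzero p_set m_def]
lemmas cycle_mpow_9 = cycle_mpow[OF n1 nonneg nonzero p_set m_def]
lemmas wl_closedw_9 = wl_closedw[OF n1 nonneg nonzero p_set m_def]
lemmas Sch_9 = S_char[OF m_pos[OF n1 nonneg nonzero p_set m_def] m_dvd(1)[OF n1 nonneg nonzero p_set m_def]]

lemma per_unfold: "per n (circ n a) = (LEAST s. s > 0 \<and> (\<exists>T. \<forall>t\<ge>T. \<forall>i\<in>{1..n}. \<forall>j\<in>{1..n}.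
            mpow n (Bm n a) (t + s) i j = mpow n (Bm n a) t i j))"
  unfolding per_def Bm_def ..

lemma mult_closed: "j \<in> {1..n} \<Longrightarrow> mpow n (Bm n a) x j j = 1 \<Longrightarrow> mpow n (Bm n a) (c * x) j j = 1"
proof (induction c)
  case 0 then show ?case by simp
next
  case (Suc c)
  have "mpow n (Bm n a) (x + c * x) j j = 1" using B_one_add_9[OF Suc.prems(1,1,1)] Suc by blast
  then show ?case by (simp add: add.commute)
qed

lemma i_in_S: "i \<in> {1..m} \<Longrightarrow> i \<in> Sc n m i"
proof -
  assume i: "i \<in> {1..m}"
  have "m \<le> n" using m_dvd[OF n1 nonneg nonzero p_set m_def] n1 by (simp add: dvd_imp_le)
  then show ?thesis using Sch_9[OF i] i by auto
qed

lemma cyc_eq: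
  assumes i: "i \<in> {1..m}" and sig: "\<sigma> > 0"
    and div: "\<And>c. closedw (CE n a) c \<Longrightarrow> \<sigma> dvd length c"
    and gd: "Gcd {length c | c. cycle_in (CE n a \<inter> Sc n m i \<times> Sc n m i) c} dvd \<sigma>"
  shows "cyclicity (crit_edges n (circ n a) \<inter> Sc n m i \<times> Sc n m i) = \<sigma>"
proof -
  have "\<sigma> dvd Gcd {length c | c. cycle_in (CE n a \<inter> Sc n m i \<times> Sc n m i) c}"
  proof (rule Gcd_greatest)
    fix l assume "l \<in> {length c | c. cycle_in (CE n a \<inter> Sc n m i \<times> Sc n m i) c}"
    then obtain c where c: "l = length c" "cycle_in (CE n a \<inter> Sc n m i \<times> Sc n m i) c" by auto
    have "closedw (CE n a) c" using closedw_mono[OF cycle_in_closedw[OF c(2)]] by blast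
    then show "\<sigma> dvd l" using div c by simp
  qed
  then show ?thesis unfolding cyclicity_def crit_edges_eq[OF n1 nonneg nonzero]
    using gd by (simp add: dvd_antisym)
qed

lemma caseA:
  assumes a0: "a 0 = mcm n (circ n a)"
  shows "per n (circ n a) = 1"
    "\<And>i. i \<in> {1..m} \<Longrightarrow> cyclicity (crit_edges n (circ n a) \<inter> Sc n m i \<times> Sc n m i) = 1"
proof -
  have a0': "a 0 = Lv n a" using a0 mcm_eq[OF n1 nonneg nonzero] by simp
  have diag1: "mpow n (Bm n a) 1 j j = 1" if j: "j \<in> {1..n}" for j
  proof -
    have "circ n a j j = a 0" unfolding circ_def by simp
    then have "Bm n a j j = 1" unfolding Bm_def using a0 mcm_eq[OF n1 nonneg nonzero] L_pos[OF n1 nonneg nonzero] by simp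
    then show ?thesis using B_1_9 j by simp
  qed
  have diag: "mpow n (Bm n a) l j j = 1" if j: "j \<in> {1..n}" for j l
    using mult_closed[OF j diag1[OF j], of l] by simp
  show "per n (circ n a) = 1"
    unfolding per_unfold
    by (rule per_charac[where B = "Bm n a", OF n1 Bnn_9 Ble_9]) (use diag in auto)
  fix i assume i: "i \<in> {1..m}"
  have iS: "i \<in> Sc n m i" by (rule i_in_S[OF i])
  have iN: "i \<in> {1..n}" using iS Sch_9[OF i] by auto
  have "(i, i) \<in> CE n a" unfolding CE_def using iN a0' by (simp add: circ_def)
  then have "cycle_in (CE n a \<inter> Sc n m i \<times> Sc n m i) [i]" unfolding cycle_in_def using iS by simp
  then have "Gcd {length c | c. cycle_in (CE n a \<inter> Sc n m i \<times> Sc n m i) c} dvd 1"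
    by (metis (mono_tags, lifting) Gcd_dvd length_Cons list.size(3) mem_Collect_eq One_nat_def)
  then show "cyclicity (crit_edges n (circ n a) \<inter> Sc n m i \<times> Sc n m i) = 1"
    by (intro cyc_eq[OF i]) auto
qed

end


context
  fixes n :: nat and a :: "nat \<Rightarrow> real" and p :: "nat list" and m :: nat
  assumes n1: "n \<ge> 1" and nonneg: "\<forall>t<n. a t \<ge> 0" and nonzero: "\<exists>t<n. a t \<noteq> 0"
    and p_sorted: "sorted_wrt (>) p"
    and p_set: "set p = {t \<in> {1..n-1}. a t = mcm n (circ n a)}"
    and m_def: "m = Gcd (insert n (set p))"
    and a0: "a 0 \<noteq> mcm n (circ n a)"
begin

lemmas H = n1 nonneg nonzero p_sorted p_set m_def
lemmas B_nn_10 = B_nn_9[OF H]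
lemmas B_le1_10 = B_le1_9[OF H]
lemmas B_1_10 = B_1_9[OF H]
lemmas B_one_add_10 = B_one_add_9[OF H]
lemmas B_Suc_ex_10 = B_Suc_ex_9[OF H]
lemmas Bnn_10 = Bnn_9[OF H]
lemmas Ble_10 = Ble_9[OF H]
lemmas Bm_one_10 = Bm_one_9[OF H]
lemmas closed_steps_10 = closed_steps_9[OF H]
lemmas cycle_mpow_10 = cycle_mpow_9[OF H]
lemmas wl_closedw_10 = wl_closedw_9[OF H]
lemmas mult_closed_10 = mult_closed[OF H]
lemmas Lv_step_10 = Lv_step[OF n1 nonneg nonzero p_set m_def]

lemma a0': "a 0 \<noteq> Lv n a" using a0 mcm_eq[OF n1 nonneg nonzero] by simp

lemma p_ne: "p \<noteq> []"
proof -
  obtain t0 where t0: "t0 < n" "a t0 = Lv n a" using L_attain[OF n1 nonneg nonzero] by blast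
  then have "t0 \<noteq> 0" using a0' by (metis)
  then have "t0 \<in> set p" using t0 p_set'[OF n1 nonneg nonzero p_set m_def] by auto
  then show ?thesis by auto
qed

definition "p1 = p ! 0"
definition "dd = Gcd (insert n {p ! 0 - p ! k | k. 1 \<le> k \<and> k < length p})"
definition "\<sigma> = dd div gcd dd p1"

lemma p1_in: "p1 \<in> set p" unfolding p1_def using p_ne by simp

lemma p1_ge: "s \<in> set p \<Longrightarrow> s \<le> p1"
proof -
  assume "s \<in> set p"
  then obtain k where k: "k < length p" "s = p ! k" by (auto simp: in_set_conv_nth)
  show "s \<le> p1"
  proof (cases k)
    case 0 then show ?thesis using k unfolding p1_def by simp
  next
    case (Suc k')
    then have "p ! 0 > p ! k" using sorted_wrt_nth_less[OF p_sorted, of 0 k] k by simp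
    then show ?thesis using k unfolding p1_def by simp
  qed
qed

lemma fin_D: "finite {p ! 0 - p ! k | k. 1 \<le> k \<and> k < length p}"
proof -
  have "{p ! 0 - p ! k | k. 1 \<le> k \<and> k < length p} = (\<lambda>k. p ! 0 - p ! k) ` {k. 1 \<le> k \<and> k < length p}" by auto
  then show ?thesis by simp
qed

lemma dd_dvd_n: "dd dvd n" unfolding dd_def by (rule Gcd_dvd) simp

lemma dd_pos: "dd > 0"
proof -
  have "dd \<noteq> 0" using dd_dvd_n n1 by (metis dvd_0_left_iff not_one_le_zero)
  then show ?thesis by simp
qed

lemma dd_p: "s \<in> set p \<Longrightarrow> int dd dvd int p1 - int s"
proof -
  assume "s \<in> set p"
  then obtain k where k: "k < length p" "s = p ! k" by (auto simp: in_set_conv_nth)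
  show ?thesis
  proof (cases k)
    case 0 then show ?thesis using k unfolding p1_def by simp
  next
    case (Suc k')
    then have "dd dvd p ! 0 - p ! k" unfolding dd_def using k by (intro Gcd_dvd) auto
    moreover have "s \<le> p1" using p1_ge \<open>s \<in> set p\<close> .
    ultimately show ?thesis using k unfolding p1_def by (simp add: of_nat_diff[symmetric] del: of_nat_diff)
  qed
qed

lemma sig_pos: "\<sigma> > 0"
  unfolding \<sigma>_def using dd_pos by (simp add: div_greater_zero_iff gcd_le1_nat)

lemma sig_dvd_dd: "\<sigma> dvd dd"
  unfolding \<sigma>_def by (metis dvd_div_mult_self dvd_triv_left gcd_dvd1)

lemma sig_dvd_n: "\<sigma> dvd n" using sig_dvd_dd dd_dvd_n by (rule dvd_trans)

lemma sig_p1: "\<sigma> * p1 = dd * (p1 div gcd dd p1)"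
proof -
  have "\<sigma> * p1 = p1 * (dd div gcd dd p1)" unfolding \<sigma>_def by simp
  also have "\<dots> = p1 * dd div gcd dd p1" by (rule div_mult_swap) simp
  also have "\<dots> = dd * (p1 div gcd dd p1)" by (subst div_mult_swap) (simp_all add: mult.commute)
  finally show ?thesis .
qed

lemma sig_char: "\<sigma> dvd t \<longleftrightarrow> dd dvd t * p1"
  unfolding \<sigma>_def using ordd[OF dd_pos] .

lemma W2:
  assumes "i \<in> {1..n}" "j \<in> {1..n}" "mpow n (Bm n a) t i j = 1"
  shows "int dd dvd (int j - int i) - int t * int p1"
  using assms(2,3)
proof (induction t arbitrary: j)
  case 0
  then have "i = j" by (simp split: if_splits)
  then show ?case by simp
next
  case (Suc t)
  obtain k where k: "k \<in> {1..n}" "mpow n (Bm n a) (Suc t) i j = mpow n (Bm n a) t i k * Bm n a k j"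
    using B_Suc_ex_10 by blast
  have o: "mpow n (Bm n a) t i k = 1" "Bm n a k j = 1"
    using mult_one[of "mpow n (Bm n a) t i k" "Bm n a k j"] k Suc.prems B_nn_10[OF assms(1) k(1)] B_le1_10[OF assms(1) k(1)] Bnn_10 Ble_10
    by auto
  have IH: "int dd dvd (int k - int i) - int t * int p1" using Suc.IH[OF k(1) o(1)] .
  have ce: "(k, j) \<in> CE n a" using Bm_one_10[OF k(1) Suc.prems(1)] o(2) by simp
  define s where "s = (j + n - k) mod n"
  have "a s = Lv n a" using ce unfolding CE_def circ_def s_def by simp
  then have "s \<noteq> 0" using a0' by (metis)
  then have sp: "s \<in> set p" using CE_step(3)[OF n1 nonneg nonzero p_set m_def ce] unfolding s_def by auto
  have nd: "int n dvd (int k - 1 + int s) - (int j - 1)"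
    using CE_step(4)[OF n1 nonneg nonzero p_set m_def ce] unfolding s_def .
  have ddn: "int dd dvd (int k - 1 + int s) - (int j - 1)"
    using nd dd_dvd_n by (meson dvd_trans int_dvd_int_iff)
  have ds: "int dd dvd int p1 - int s" using dd_p[OF sp] .
  have "int dd dvd ((int k - int i) - int t * int p1) - ((int k - 1 + int s) - (int j - 1)) - (int p1 - int s)"
    using dvd_diff[OF dvd_diff[OF IH ddn] ds] .
  moreover have "((int k - int i) - int t * int p1) - ((int k - 1 + int s) - (int j - 1)) - (int p1 - int s)
      = (int j - int i) - int (Suc t) * int p1" by (simp add: algebra_simps)
  ultimately show ?case by metis
qed

lemma W2': "i \<in> {1..n} \<Longrightarrow> mpow n (Bm n a) t i i = 1 \<Longrightarrow> \<sigma> dvd t"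
proof -
  assume i: "i \<in> {1..n}" and e: "mpow n (Bm n a) t i i = 1"
  have "int dd dvd - (int t * int p1)" using W2[OF i i e] by simp
  then have "int dd dvd int (t * p1)" by simp
  then have "dd dvd t * p1" by presburger
  then show ?thesis using sig_char by simp
qed

definition "Psi = {y::int. \<exists>ss. set ss \<subseteq> set p \<and> int n dvd (int (sum_list ss) - int (length ss) * int p1 - y)}"

lemma Psi0: "0 \<in> Psi" unfolding Psi_def by (intro CollectI exI[of _ "[]"]) simp

lemma Psi_add: "x \<in> Psi \<Longrightarrow> y \<in> Psi \<Longrightarrow> x + y \<in> Psi"
proof -
  assume "x \<in> Psi" "y \<in> Psi"
  then obtain s1 s2 where s: "set s1 \<subseteq> set p" "int n dvd (int (sum_list s1) - int (length s1) * int p1 - x)"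
    "set s2 \<subseteq> set p" "int n dvd (int (sum_list s2) - int (length s2) * int p1 - y)"
    unfolding Psi_def by blast
  have "int n dvd (int (sum_list s1) - int (length s1) * int p1 - x) + (int (sum_list s2) - int (length s2) * int p1 - y)"
    using s by (intro dvd_add)
  moreover have "(int (sum_list s1) - int (length s1) * int p1 - x) + (int (sum_list s2) - int (length s2) * int p1 - y)
     = int (sum_list (s1 @ s2)) - int (length (s1 @ s2)) * int p1 - (x + y)" by (simp add: algebra_simps)
  ultimately show "x + y \<in> Psi" unfolding Psi_def using s by (intro CollectI exI[of _ "s1 @ s2"]) auto
qed

lemma Psi_neg: "x \<in> Psi \<Longrightarrow> - x \<in> Psi"
proof -
  assume "x \<in> Psi"
  then obtain s1 where s: "set s1 \<subseteq> set p" "int n dvd (int (sum_list s1) - int (length s1) * int p1 - x)"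
    unfolding Psi_def by blast
  let ?ss = "concat (replicate (n - 1) s1)"
  define D where "D = int (sum_list s1) - int (length s1) * int p1 - x"
  have "int n dvd int (n - 1) * D + int n * x" using s(2) unfolding D_def by simp
  moreover have "int (n - 1) * D + int n * x = int (sum_list ?ss) - int (length ?ss) * int p1 - (- x)"
    unfolding D_def sum_list_rep length_rep using n1 by (simp add: of_nat_diff algebra_simps)
  ultimately show "- x \<in> Psi" unfolding Psi_def using s(1) set_rep
    by (intro CollectI exI[of _ ?ss]) auto
qed

lemma dd_Psi: "int dd \<in> Psi"
  unfolding dd_def
proof (rule int_subgroup_Gcd[OF Psi0 Psi_add Psi_neg])
  show "finite (insert n {p ! 0 - p ! k | k. 1 \<le> k \<and> k < length p})" using fin_D by simp
  fix x assume x: "x \<in> insert n {p ! 0 - p ! k | k. 1 \<le> k \<and> k < length p}"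
  show "int x \<in> Psi"
  proof (cases "x = n")
    case True then show ?thesis unfolding Psi_def by (intro CollectI exI[of _ "[]"]) simp
  next
    case False
    then obtain k where k: "1 \<le> k" "k < length p" "x = p ! 0 - p ! k" using x by auto
    have pk: "p ! k \<in> set p" using k by simp
    have "int (p ! k) - int p1 \<in> Psi" unfolding Psi_def using pk by (intro CollectI exI[of _ "[p ! k]"]) auto
    from Psi_neg[OF this] have "int p1 - int (p ! k) \<in> Psi" by simp
    moreover have "int x = int p1 - int (p ! k)" using k p1_ge[OF pk] unfolding p1_def by simp
    ultimately show ?thesis by simp
  qed
qed

lemma Y_exists: "\<exists>ss K. set ss \<subseteq> set p \<and> ss \<noteq> [] \<and> n dvd sum_list ss \<and> length ss = \<sigma> + n * K"
proof -
  have "(- int (p1 div gcd dd p1)) * int dd \<in> Psi"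
    by (rule int_subgroup_mult[OF Psi0 Psi_add Psi_neg dd_Psi])
  then have "int dd * (- int (p1 div gcd dd p1)) \<in> Psi" by (metis mult.commute)
  moreover have "int dd * (- int (p1 div gcd dd p1)) = - (int \<sigma> * int p1)"
    using arg_cong[OF sig_p1, of int] by simp
  ultimately have "- (int \<sigma> * int p1) \<in> Psi" by simp
  then obtain s0 where s0: "set s0 \<subseteq> set p" "int n dvd (int (sum_list s0) - int (length s0) * int p1 + int \<sigma> * int p1)"
    unfolding Psi_def by auto
  define c where "c = nat ((int \<sigma> - int (length s0)) mod int n)"
  have c1: "int c = (int \<sigma> - int (length s0)) mod int n" unfolding c_def using n1 by simp
  have c2: "int n dvd int c - (int \<sigma> - int (length s0))" unfolding c1 by (simp add: mod_eq_dvd_iff[symmetric])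
  define ss where "ss = s0 @ replicate c p1 @ replicate n p1"
  have set_ss: "set ss \<subseteq> set p" unfolding ss_def using s0(1) p1_in by auto
  have len: "length ss = length s0 + c + n" unfolding ss_def by simp
  have sum: "sum_list ss = sum_list s0 + c * p1 + n * p1" unfolding ss_def by (simp add: sum_list_replicate)
  have "int n dvd (int (sum_list s0) - int (length s0) * int p1 + int \<sigma> * int p1) + (int c - (int \<sigma> - int (length s0))) * int p1 + int n * int p1"
    using dvd_add[OF dvd_add[OF s0(2) dvd_mult2[OF c2, of "int p1"]] dvd_triv_left[of "int n" "int p1"]] .
  moreover have "(int (sum_list s0) - int (length s0) * int p1 + int \<sigma> * int p1) + (int c - (int \<sigma> - int (length s0))) * int p1 + int n * int p1
     = int (sum_list ss)" unfolding sum by (simp add: algebra_simps)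
  ultimately have "int n dvd int (sum_list ss)" by simp
  then have nd: "n dvd sum_list ss" by presburger
  have "int n dvd (int c - (int \<sigma> - int (length s0))) + int n" using c2 by simp
  moreover have "(int c - (int \<sigma> - int (length s0))) + int n = int (length ss) - int \<sigma>" unfolding len by simp
  ultimately have d: "int n dvd int (length ss) - int \<sigma>" by simp
  have "\<sigma> \<le> n" using sig_dvd_n n1 by (simp add: dvd_imp_le)
  then have ge: "\<sigma> \<le> length ss" using len by simp
  then have "int n dvd int (length ss - \<sigma>)" using d by (simp add: of_nat_diff)
  then have "n dvd length ss - \<sigma>" by presburger
  then obtain K where "length ss - \<sigma> = n * K" by (metis dvdE)
  then have "length ss = \<sigma> + n * K" using ge by simp
  moreover have "ss \<noteq> []" unfolding ss_def using n1 by simp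
  ultimately show ?thesis using set_ss nd by blast
qed

lemma diagB: "j \<in> {1..n} \<Longrightarrow> \<exists>J. \<forall>l\<ge>J. \<sigma> dvd l \<longrightarrow> mpow n (Bm n a) l j j = 1"
proof -
  assume j: "j \<in> {1..n}"
  obtain ss K where ss: "set ss \<subseteq> set p" "n dvd sum_list ss" "length ss = \<sigma> + n * K"
    using Y_exists by blast
  have Y: "mpow n (Bm n a) (\<sigma> + n * K) j j = 1" using closed_steps_10[OF ss(1,2) j] ss(3) by simp
  have rs: "set (replicate n p1) \<subseteq> set p" using p1_in by auto
  have X: "mpow n (Bm n a) n j j = 1"
    using closed_steps_10[of "replicate n p1", OF rs _ j] by (simp add: sum_list_replicate)
  obtain q where q: "n = \<sigma> * q" using sig_dvd_n by (metis dvdE)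
  have q0: "q > 0" using q n1 by (cases q) auto
  show ?thesis
  proof (intro exI[of _ "\<sigma> * (q * (q * K))"] allI impI)
    fix l assume l: "\<sigma> * (q * (q * K)) \<le> l" "\<sigma> dvd l"
    obtain jj where jj: "l = \<sigma> * jj" using l(2) by (metis dvdE)
    have "q * (q * K) \<le> jj" using l(1) jj sig_pos by simp
    define u where "u = jj div q"
    define b where "b = jj mod q"
    have jjq: "jj = q * u + b" unfolding u_def b_def by simp
    have bq: "b < q" unfolding b_def using q0 by simp
    have "q * (q * K) div q \<le> jj div q" using \<open>q * (q * K) \<le> jj\<close> by (rule div_le_mono)
    then have uK: "q * K \<le> u" unfolding u_def using q0 by simp
    have "b * K \<le> q * K" using bq by simp
    then have bK: "b * K \<le> u" using uK by (rule order_trans)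
    have "l = n * (u - b * K) + b * (\<sigma> + n * K)"
    proof -
      have "n * (u - b * K) + n * (b * K) = n * u" using bK by (simp add: diff_mult_distrib2)
      then have "n * (u - b * K) + b * (\<sigma> + n * K) = n * u + b * \<sigma>" by (simp add: algebra_simps)
      also have "\<dots> = \<sigma> * (q * u + b)" using q by (simp add: algebra_simps)
      also have "\<dots> = \<sigma> * jj" using jjq by simp
      finally show ?thesis using jj by simp
    qed
    moreover have "mpow n (Bm n a) (n * (u - b * K)) j j = 1"
      using mult_closed_10[OF j X, of "u - b * K"] by (simp add: mult.commute)
    moreover have "mpow n (Bm n a) (b * (\<sigma> + n * K)) j j = 1" using mult_closed_10[OF j Y] .
    ultimately show "mpow n (Bm n a) l j j = 1" using B_one_add_10[OF j j j] by metis
  qed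
qed

lemma perB: "per n (circ n a) = \<sigma>"
  unfolding per_unfold[OF H]
proof (rule per_charac[where B = "Bm n a", OF n1 Bnn_10 Ble_10 sig_pos])
  show "\<And>j. j \<in> {1..n} \<Longrightarrow> \<exists>J. \<forall>l\<ge>J. \<sigma> dvd l \<longrightarrow> mpow n (Bm n a) l j j = 1" by (rule diagB)
  fix t assume "mpow n (Bm n a) t 1 1 = 1"
  then show "\<sigma> dvd t" using W2'[of 1 t] n1 by simp
qed

lemma cycB: "i \<in> {1..m} \<Longrightarrow> cyclicity (crit_edges n (circ n a) \<inter> Sc n m i \<times> Sc n m i) = \<sigma>"
proof -
  assume i: "i \<in> {1..m}"
  let ?G = "Gcd {length c | c. cycle_in (CE n a \<inter> Sc n m i \<times> Sc n m i) c}"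
  have div: "\<sigma> dvd length c" if c: "closedw (CE n a) c" for c
  proof -
    have "c \<noteq> []" using c unfolding closedw_def by simp
    then have "c ! 0 \<in> {1..n}" using c unfolding closedw_def CE_def by auto
    then show ?thesis using W2' cycle_mpow_10[OF c] by blast
  qed
  obtain ss K where ss: "set ss \<subseteq> set p" "ss \<noteq> []" "n dvd sum_list ss" "length ss = \<sigma> + n * K"
    using Y_exists by blast
  have g1: "?G dvd \<sigma> + n * K"
    using closedw_gcd[OF wl_closedw_10(1)[OF i ss(2,1,3)]] wl_closedw_10(2)[OF i ss(2,1,3)] ss(4) by simp
  have r: "replicate n p1 \<noteq> []" "set (replicate n p1) \<subseteq> set p" "n dvd sum_list (replicate n p1)"
    using n1 p1_in by (auto simp: sum_list_replicate)
  have g2: "?G dvd n"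
    using closedw_gcd[OF wl_closedw_10(1)[OF i r]] wl_closedw_10(2)[OF i r] by simp
  have "?G dvd n * K" using g2 by simp
  then have "?G dvd \<sigma>" using g1 by (simp add: dvd_add_left_iff)
  then show ?thesis using cyc_eq[OF H i sig_pos div] by simp
qed

lemma div_mul_swap': "(X::nat) dvd A \<Longrightarrow> X dvd B \<Longrightarrow> (A div X) * B = A * (B div X)"
proof -
  assume d: "X dvd A" "X dvd B"
  have "(A div X) * B = B * A div X" using div_mult_swap[OF d(1), of B] by (simp add: mult.commute)
  also have "\<dots> = A * (B div X)" using div_mult_swap[OF d(2), of A] by (simp add: mult.commute)
  finally show ?thesis .
qed

lemma g_props: "gcd dd p1 > 0" "gcd dd p1 dvd n" "\<And>s. s \<in> set p \<Longrightarrow> gcd dd p1 dvd s"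
proof -
  show "gcd dd p1 > 0" using dd_pos by simp
  show "gcd dd p1 dvd n" using dd_dvd_n by (metis gcd_dvd1 dvd_trans)
  fix s assume s: "s \<in> set p"
  have "int dd dvd int p1 - int s" using dd_p[OF s] .
  then have "int dd dvd int (p1 - s)" using p1_ge[OF s] by (simp add: of_nat_diff)
  then have "dd dvd p1 - s" by presburger
  then have "gcd dd p1 dvd p1 - s" by (metis gcd_dvd1 dvd_trans)
  moreover have "gcd dd p1 dvd p1" by simp
  ultimately have "gcd dd p1 dvd p1 - (p1 - s)" by (rule dvd_diff_nat[rotated])
  then show "gcd dd p1 dvd s" using p1_ge[OF s] by simp
qed

lemma dd_dvd_diff: "s \<in> set p \<Longrightarrow> dd dvd p1 - s"
proof -
  assume s: "s \<in> set p"
  have "int dd dvd int (p1 - s)" using dd_p[OF s] p1_ge[OF s] by (simp add: of_nat_diff)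
  then show ?thesis by presburger
qed

lemma gcd_formula:
  assumes T1: "n div gcd n p1 \<in> T" and T2: "\<And>t. t \<in> T \<Longrightarrow> dd dvd t * p1"
    and T3: "\<And>k. 1 \<le> k \<Longrightarrow> k < length p \<Longrightarrow> Gcd T * gcd dd p1 dvd p1 - p ! k"
  shows "Gcd T = \<sigma>"
proof -
  let ?g = "gcd dd p1"
  have s1: "\<sigma> dvd Gcd T" by (rule Gcd_greatest) (use T2 sig_char in auto)
  have "Gcd T dvd n div gcd n p1" using T1 by (rule Gcd_dvd)
  moreover have "?g dvd gcd n p1" using g_props(2) by simp
  ultimately have "Gcd T * ?g dvd (n div gcd n p1) * gcd n p1" by (rule mult_dvd_mono)
  then have h1: "Gcd T * ?g dvd n" by simp
  have "Gcd T * ?g dvd Gcd (insert n {p ! 0 - p ! k | k. 1 \<le> k \<and> k < length p})"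
    by (rule Gcd_greatest) (use h1 T3 in \<open>auto simp: p1_def\<close>)
  then have h2: "Gcd T * ?g dvd dd" by (simp only: dd_def[symmetric])
  have e: "\<sigma> * ?g = dd" unfolding \<sigma>_def by simp
  have h3: "Gcd T * ?g dvd \<sigma> * ?g" unfolding e by (rule h2)
  have g0: "?g \<noteq> 0" using g_props(1) by simp
  have "Gcd T dvd \<sigma>" using h3 dvd_times_right_cancel_iff[OF g0] by simp
  then show ?thesis using s1 by (simp add: dvd_antisym)
qed

lemma pk_in: "k < length p \<Longrightarrow> p ! k \<in> set p" by simp

lemma in_take: "i \<le> k \<Longrightarrow> k < length p \<Longrightarrow> p ! i \<in> set (take (k + 1) p)"
proof -
  assume ik: "i \<le> k" "k < length p"
  have "take (k + 1) p ! i = p ! i" using ik by simp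
  moreover have "i < length (take (k + 1) p)" using ik by simp
  ultimately show ?thesis by (metis nth_mem)
qed

lemma formula1:
  "Gcd (insert (n div gcd n (p ! 0)) {(p ! 0 - p ! k) div gcd (p ! 0) (p ! k) | k. 1 \<le> k \<and> k < length p}) = \<sigma>"
  unfolding p1_def[symmetric]
proof (rule gcd_formula)
  let ?T = "insert (n div gcd n p1) {(p1 - p ! k) div gcd p1 (p ! k) | k. 1 \<le> k \<and> k < length p}"
  show "n div gcd n p1 \<in> ?T" by simp
  fix t assume "t \<in> ?T"
  then show "dd dvd t * p1"
  proof
    assume "t = n div gcd n p1"
    then have "t * p1 = n * (p1 div gcd n p1)" by (simp add: div_mul_swap')
    then show ?thesis using dd_dvd_n by simp
  next
    assume "t \<in> {(p1 - p ! k) div gcd p1 (p ! k) | k. 1 \<le> k \<and> k < length p}"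
    then obtain k where k: "k < length p" "t = (p1 - p ! k) div gcd p1 (p ! k)" by auto
    have X: "gcd p1 (p ! k) dvd p1 - p ! k" "gcd p1 (p ! k) dvd p1" by (auto intro: dvd_diff_nat)
    then have "t * p1 = (p1 - p ! k) * (p1 div gcd p1 (p ! k))" using k by (simp add: div_mul_swap')
    then show ?thesis using dd_dvd_diff[OF pk_in[OF k(1)]] by simp
  qed
next
  let ?T = "insert (n div gcd n p1) {(p1 - p ! k) div gcd p1 (p ! k) | k. 1 \<le> k \<and> k < length p}"
  fix k assume k: "1 \<le> k" "k < length p"
  let ?X = "gcd p1 (p ! k)"
  have "Gcd ?T dvd (p1 - p ! k) div ?X" using k by (intro Gcd_dvd) auto
  moreover have "gcd dd p1 dvd ?X" using g_props(3)[OF pk_in[OF k(2)]] by simp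
  ultimately have "Gcd ?T * gcd dd p1 dvd ((p1 - p ! k) div ?X) * ?X" by (rule mult_dvd_mono)
  moreover have "((p1 - p ! k) div ?X) * ?X = p1 - p ! k" by (simp add: dvd_diff_nat)
  ultimately show "Gcd ?T * gcd dd p1 dvd p1 - p ! k" by simp
qed

lemma formula3:
  "Gcd (insert (n div gcd n (p ! 0))
        {(p ! 0 - p ! k) div Gcd (insert n (set (take (k + 1) p))) | k. 1 \<le> k \<and> k < length p}) = \<sigma>"
  unfolding p1_def[symmetric]
proof (rule gcd_formula)
  let ?T = "insert (n div gcd n p1) {(p1 - p ! k) div Gcd (insert n (set (take (k + 1) p))) | k. 1 \<le> k \<and> k < length p}"
  have Xd: "Gcd (insert n (set (take (k + 1) p))) dvd p1" "Gcd (insert n (set (take (k + 1) p))) dvd p ! k"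
    if "k < length p" for k
  proof -
    have "p1 \<in> set (take (k + 1) p)" unfolding p1_def using in_take[of 0 k] that by simp
    then show "Gcd (insert n (set (take (k + 1) p))) dvd p1" by (intro Gcd_dvd) simp
    have "p ! k \<in> set (take (k + 1) p)" using in_take[of k k] that by simp
    then show "Gcd (insert n (set (take (k + 1) p))) dvd p ! k" by (intro Gcd_dvd) simp
  qed
  show "n div gcd n p1 \<in> ?T" by simp
  fix t assume "t \<in> ?T"
  then show "dd dvd t * p1"
  proof
    assume "t = n div gcd n p1"
    then have "t * p1 = n * (p1 div gcd n p1)" by (simp add: div_mul_swap')
    then show ?thesis using dd_dvd_n by simp
  next
    assume "t \<in> {(p1 - p ! k) div Gcd (insert n (set (take (k + 1) p))) | k. 1 \<le> k \<and> k < length p}"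
    then obtain k where k: "k < length p" "t = (p1 - p ! k) div Gcd (insert n (set (take (k + 1) p)))" by auto
    have X: "Gcd (insert n (set (take (k + 1) p))) dvd p1 - p ! k"
      using Xd[OF k(1)] by (rule dvd_diff_nat)
    then have "t * p1 = (p1 - p ! k) * (p1 div Gcd (insert n (set (take (k + 1) p))))"
      using k Xd[OF k(1)] by (simp add: div_mul_swap')
    then show ?thesis using dd_dvd_diff[OF pk_in[OF k(1)]] by simp
  qed
next
  let ?T = "insert (n div gcd n p1) {(p1 - p ! k) div Gcd (insert n (set (take (k + 1) p))) | k. 1 \<le> k \<and> k < length p}"
  fix k assume k: "1 \<le> k" "k < length p"
  let ?X = "Gcd (insert n (set (take (k + 1) p)))"
  have Xd: "?X dvd p1 - p ! k"
  proof -
    have "p1 \<in> set (take (k + 1) p)" unfolding p1_def using in_take[of 0 k] k by simp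
    moreover have "p ! k \<in> set (take (k + 1) p)" using in_take[of k k] k by simp
    ultimately show ?thesis by (intro dvd_diff_nat Gcd_dvd) auto
  qed
  have "Gcd ?T dvd (p1 - p ! k) div ?X" using k by (intro Gcd_dvd) auto
  moreover have "gcd dd p1 dvd ?X"
  proof (rule Gcd_greatest)
    fix b assume "b \<in> insert n (set (take (k + 1) p))"
    then have "b = n \<or> b \<in> set p" by (auto dest: in_set_takeD)
    then show "gcd dd p1 dvd b" using g_props(2,3) by auto
  qed
  ultimately have "Gcd ?T * gcd dd p1 dvd ((p1 - p ! k) div ?X) * ?X" by (rule mult_dvd_mono)
  moreover have "((p1 - p ! k) div ?X) * ?X = p1 - p ! k" using Xd by simp
  ultimately show "Gcd ?T * gcd dd p1 dvd p1 - p ! k" by simp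
qed

lemma formula2:
  "Gcd (insert (n div gcd n (p ! 0))
        {(p ! (k - 1) - p ! k) div gcd (p ! (k - 1)) (p ! k) | k. 1 \<le> k \<and> k < length p}) = \<sigma>"
  unfolding p1_def[symmetric]
proof (rule gcd_formula)
  let ?T = "insert (n div gcd n p1) {(p ! (k - 1) - p ! k) div gcd (p ! (k - 1)) (p ! k) | k. 1 \<le> k \<and> k < length p}"
  have dec: "p ! k < p ! (k - 1)" if "1 \<le> k" "k < length p" for k
    using sorted_wrt_nth_less[OF p_sorted, of "k - 1" k] that by simp
  show "n div gcd n p1 \<in> ?T" by simp
  fix t assume "t \<in> ?T"
  then show "dd dvd t * p1"
  proof
    assume "t = n div gcd n p1"
    then have "t * p1 = n * (p1 div gcd n p1)" by (simp add: div_mul_swap')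
    then show ?thesis using dd_dvd_n by simp
  next
    assume "t \<in> {(p ! (k - 1) - p ! k) div gcd (p ! (k - 1)) (p ! k) | k. 1 \<le> k \<and> k < length p}"
    then obtain k where k: "1 \<le> k" "k < length p" "t = (p ! (k - 1) - p ! k) div gcd (p ! (k - 1)) (p ! k)" by auto
    let ?X = "gcd (p ! (k - 1)) (p ! k)"
    have km: "k - 1 < length p" using k by simp
    have X: "?X dvd p ! (k - 1) - p ! k" "?X dvd p ! (k - 1)" by (auto intro: dvd_diff_nat)
    have t1: "t * p ! (k - 1) = (p ! (k - 1) - p ! k) * (p ! (k - 1) div ?X)"
      using k X by (simp add: div_mul_swap')
    have i1: "int dd dvd int p1 - int (p ! k)" using dd_p[OF pk_in[OF k(2)]] .
    have i2: "int dd dvd int p1 - int (p ! (k - 1))" using dd_p[OF pk_in[OF km]] .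
    have "int dd dvd (int p1 - int (p ! k)) - (int p1 - int (p ! (k - 1)))" using dvd_diff[OF i1 i2] .
    then have "int dd dvd int (p ! (k - 1) - p ! k)" using dec[OF k(1,2)] by (simp add: of_nat_diff)
    then have "dd dvd p ! (k - 1) - p ! k" by presburger
    then have "dd dvd t * p ! (k - 1)" using t1 by simp
    moreover have "dd dvd t * (p1 - p ! (k - 1))" using dd_dvd_diff[OF pk_in[OF km]] by simp
    ultimately have "dd dvd t * p ! (k - 1) + t * (p1 - p ! (k - 1))" by (rule dvd_add)
    moreover have "t * p ! (k - 1) + t * (p1 - p ! (k - 1)) = t * p1"
      using p1_ge[OF pk_in[OF km]] by (simp add: add_mult_distrib2[symmetric])
    ultimately show ?thesis by simp
  qed
next
  let ?T = "insert (n div gcd n p1) {(p ! (k - 1) - p ! k) div gcd (p ! (k - 1)) (p ! k) | k. 1 \<le> k \<and> k < length p}"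
  have dec: "p ! k < p ! (k - 1)" if "1 \<le> k" "k < length p" for k
    using sorted_wrt_nth_less[OF p_sorted, of "k - 1" k] that by simp
  have step: "Gcd ?T * gcd dd p1 dvd p ! (k - 1) - p ! k" if k: "1 \<le> k" "k < length p" for k
  proof -
    let ?X = "gcd (p ! (k - 1)) (p ! k)"
    have km: "k - 1 < length p" using k by simp
    have "Gcd ?T dvd (p ! (k - 1) - p ! k) div ?X" using k by (intro Gcd_dvd) auto
    moreover have "gcd dd p1 dvd ?X" using g_props(3)[OF pk_in[OF k(2)]] g_props(3)[OF pk_in[OF km]] by simp
    ultimately have "Gcd ?T * gcd dd p1 dvd ((p ! (k - 1) - p ! k) div ?X) * ?X" by (rule mult_dvd_mono)
    moreover have "((p ! (k - 1) - p ! k) div ?X) * ?X = p ! (k - 1) - p ! k" by (simp add: dvd_diff_nat)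
    ultimately show ?thesis by simp
  qed
  have p10: "p ! 0 = p1" unfolding p1_def ..
  fix k assume k: "1 \<le> k" "k < length p"
  show "Gcd ?T * gcd dd p1 dvd p1 - p ! k"
    using k
  proof (induction k)
    case 0 then show ?case by simp
  next
    case (Suc k)
    show ?case
    proof (cases "k = 0")
      case True then show ?thesis using step[OF Suc.prems] p10 by simp
    next
      case False
      have IH: "Gcd ?T * gcd dd p1 dvd p1 - p ! k" using Suc False by simp
      have st: "Gcd ?T * gcd dd p1 dvd p ! k - p ! Suc k" using step[OF Suc.prems] by simp
      have le1: "p ! Suc k \<le> p ! k" using dec[OF Suc.prems] by simp
      have le2: "p ! k \<le> p1" using p1_ge[OF pk_in, of k] Suc.prems by simp
      have "p1 - p ! Suc k = (p1 - p ! k) + (p ! k - p ! Suc k)" using le1 le2 by simp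
      then show ?thesis using dvd_add[OF IH st] by simp
    qed
  qed
qed

end


theorem proposition3:
  fixes n :: nat and a :: "nat \<Rightarrow> real" and p :: "nat list" and m :: nat
    and S :: "nat \<Rightarrow> nat set"
  assumes n_pos: "n \<ge> 1"
    and nonneg: "\<forall>t < n. a t \<ge> 0"
    and nonzero: "\<exists>t < n. a t \<noteq> 0"
    and p_sorted: "sorted_wrt (>) p"
    and p_set: "set p = {t \<in> {1..n-1}. a t = mcm n (circ n a)}"
    and m_def: "m = Gcd (insert n (set p))"
    and S_def: "\<forall>i. S i = (\<lambda>k. i + k * m) ` {0..<n div m}"
  shows
    "crit_nodes n (circ n a) = (\<Union>i \<in> {1..m}. S i)
     \<and> (\<forall>i \<in> {1..m}. \<forall>j \<in> {1..m}. i \<noteq> j \<longrightarrow> S i \<inter> S j = {})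
     \<and> crit_edges n (circ n a) \<subseteq> (\<Union>i \<in> {1..m}. S i \<times> S i)
     \<and> (\<forall>i \<in> {1..m}. strongly_connected_on (crit_edges n (circ n a)) (S i))
     \<and> (\<forall>i \<in> {1..m}. \<forall>j \<in> {1..m}. \<exists>f. bij_betw f (S i) (S j) \<and>
          (\<forall>x \<in> S i. \<forall>y \<in> S i. (x, y) \<in> crit_edges n (circ n a) \<longleftrightarrow>
                                 (f x, f y) \<in> crit_edges n (circ n a)))
     \<and> (\<forall>i \<in> {1..m}. cyclicity (crit_edges n (circ n a) \<inter> S i \<times> S i) = per n (circ n a))
     \<and> (a 0 = mcm n (circ n a) \<longrightarrow> per n (circ n a) = 1)
     \<and> (a 0 \<noteq> mcm n (circ n a) \<longrightarrow>
          per n (circ n a) =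
            Gcd (insert (n div gcd n (p ! 0))
                 {(p ! 0 - p ! k) div gcd (p ! 0) (p ! k) | k. 1 \<le> k \<and> k < length p})
        \<and> per n (circ n a) =
            Gcd (insert (n div gcd n (p ! 0))
                 {(p ! (k - 1) - p ! k) div gcd (p ! (k - 1)) (p ! k) | k. 1 \<le> k \<and> k < length p})
        \<and> per n (circ n a) =
            Gcd (insert (n div gcd n (p ! 0))
                 {(p ! 0 - p ! k) div Gcd (insert n (set (take (k + 1) p))) | k. 1 \<le> k \<and> k < length p}))"
proof -
  have Seq: "S = Sc n m" using S_def unfolding Sc_def by auto
  note H = n_pos nonneg nonzero p_set m_def
  note H2 = n_pos nonneg nonzero p_sorted p_set m_def
  have c1: "crit_nodes n (circ n a) = (\<Union>i \<in> {1..m}. S i)" unfolding Seq by (rule nodes_union[OF H])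
  have c2: "\<forall>i \<in> {1..m}. \<forall>j \<in> {1..m}. i \<noteq> j \<longrightarrow> S i \<inter> S j = {}"
    unfolding Seq using disj[OF H] by blast
  have c3: "crit_edges n (circ n a) \<subseteq> (\<Union>i \<in> {1..m}. S i \<times> S i)" unfolding Seq by (rule edges_in[OF H])
  have c4: "\<forall>i \<in> {1..m}. strongly_connected_on (crit_edges n (circ n a)) (S i)"
    unfolding Seq crit_edges_eq[OF n_pos nonneg nonzero] using strongly_conn[OF H] by blast
  have c5: "\<forall>i \<in> {1..m}. \<forall>j \<in> {1..m}. \<exists>f. bij_betw f (S i) (S j) \<and>
          (\<forall>x \<in> S i. \<forall>y \<in> S i. (x, y) \<in> crit_edges n (circ n a) \<longleftrightarrow>
                                 (f x, f y) \<in> crit_edges n (circ n a))"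
    unfolding Seq using iso[OF H] by blast
  show ?thesis
  proof (cases "a 0 = mcm n (circ n a)")
    case True
    have c6: "\<forall>i \<in> {1..m}. cyclicity (crit_edges n (circ n a) \<inter> S i \<times> S i) = per n (circ n a)"
      unfolding Seq using caseA(1)[OF H2 True] caseA(2)[OF H2 True] by simp
    show ?thesis using c1 c2 c3 c4 c5 c6 caseA(1)[OF H2 True] True by blast
  next
    case False
    have c6: "\<forall>i \<in> {1..m}. cyclicity (crit_edges n (circ n a) \<inter> S i \<times> S i) = per n (circ n a)"
      unfolding Seq using cycB[OF H2 False] perB[OF H2 False] by simp
    have f: "per n (circ n a) =
            Gcd (insert (n div gcd n (p ! 0))
                 {(p ! 0 - p ! k) div gcd (p ! 0) (p ! k) | k. 1 \<le> k \<and> k < length p})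
        \<and> per n (circ n a) =
            Gcd (insert (n div gcd n (p ! 0))
                 {(p ! (k - 1) - p ! k) div gcd (p ! (k - 1)) (p ! k) | k. 1 \<le> k \<and> k < length p})
        \<and> per n (circ n a) =
            Gcd (insert (n div gcd n (p ! 0))
                 {(p ! 0 - p ! k) div Gcd (insert n (set (take (k + 1) p))) | k. 1 \<le> k \<and> k < length p})"
      using perB[OF H2 False] formula1[OF H2 False] formula2[OF H2 False] formula3[OF H2 False] by simp
    show ?thesis using c1 c2 c3 c4 c5 c6 f False by blast
  qed
qed

end
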